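(* Consider a state-dependent discrete memoryless channel $W_{Y,Z|X,S}$ with finite alphabets, i.i.d. state distribution $Q_S$, innocent symbol $x_0$, and strictly causal channel state information available only at the transmitter (encoder $X_i=f_i(M,S^{i-1})$, decoder $Y^n\mapsto\hat M$). Let $\mathcal D$ be the set of joint pmfs $P_{S,V,X,Y,Z}=Q_SP_VP_{X|V}W_{Y,Z|X,S}$, where $V$ is an auxiliary random variable on a finite alphabet with $|\mathcal V|\le|\mathcal X|$, such that $P_Z=Q_0$ and $\mathbb I(X;Y)\ge\mathbb I(V;Z)$. Let $\mathcal S=\{R\ge0:\exists P\in\mathcal D\text{ with }R\le\mathbb I(X;Y)\}$. Then the covert capacity satisfies $C_{\mathrm{SC\text{-}T}}\le\max\{x:x\in\mathcal S\}$.
   Context: Finite alphabets $\mathcal S,\mathcal X,\mathcal Y,\mathcal Z$. The channel has transition pmf $W_{Y,Z|X,S}$: input $X$, state $S$, output $Y$ at the legitimate receiver and output $Z$ at an adversary (warden). The state sequence $S^n$ is i.i.d. with pmf $Q_S$ and independent of the message; neither the legitimate receiver nor the warden knows the state. $x_0\in\mathcal X$ is a fixed innocent symbol, and $Q_0(z)=\sum_{s}Q_S(s)W_{Z|X,S}(z|x_0,s)$, assumed to have full support on $\mathcal Z$. A $(2^{nR},n)$ code consists of a message $M$ uniform on $\{1,\dots,2^{nR}\}$, an encoder and a decoder of the type specified. $P_{Z^n}$ denotes the distribution of the warden's output induced by the code. A rate $R$ is achievable if there is a sequence of $(2^{nR},n)$ codes with $\mathbb P(\hat M\ne M)\to 0$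 and $\mathbb D(P_{Z^n}\|Q_0^{\otimes n})\to 0$ as $n\to\infty$; the covert capacity is the supremum of achievable rates. Mutual informations are computed under the indicated joint pmf. *)

theory Defs
  imports Complex_Main
begin

definition is_pmf_on :: "'a set \<Rightarrow> ('a \<Rightarrow> real) \<Rightarrow> bool" where
  "is_pmf_on A p \<longleftrightarrow> (\<forall>a\<in>A. 0 \<le> p a) \<and> (\<Sum>a\<in>A. p a) = 1"

definition mutual_info :: "'a set \<Rightarrow> 'b set \<Rightarrow> ('a \<Rightarrow> 'b \<Rightarrow> real) \<Rightarrow> real" where
  "mutual_info A B p =
     (\<Sum>a\<in>A. \<Sum>b\<in>B. if p a b = 0 then 0
        else p a b * log 2 (p a b / ((\<Sum>b'\<in>B. p a b') * (\<Sum>a'\<in>A. p a' b))))"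

definition kl_div :: "'a set \<Rightarrow> ('a \<Rightarrow> real) \<Rightarrow> ('a \<Rightarrow> real) \<Rightarrow> real" where
  "kl_div A p q = (\<Sum>a\<in>A. if p a = 0 then 0 else p a * log 2 (p a / q a))"

text \<open>W x s y z = W_{Y,Z|X,S}(y,z|x,s); Q s = Q_S(s).\<close>

definition Q0 :: "('x \<Rightarrow> 's \<Rightarrow> 'y \<Rightarrow> 'z \<Rightarrow> real) \<Rightarrow> ('s \<Rightarrow> real) \<Rightarrow> 'x \<Rightarrow> 'z \<Rightarrow> real" where
  "Q0 W Q x0 z = (\<Sum>s\<in>UNIV. Q s * (\<Sum>y\<in>UNIV. W x0 s y z))"

definition seqs :: "nat \<Rightarrow> 'a list set" where
  "seqs n = {xs. length xs = n}"

definition num_msgs :: "real \<Rightarrow> nat \<Rightarrow> nat" where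
  "num_msgs R n = nat \<lceil>2 powr (real n * R)\<rceil>"

text \<open>Strictly causal encoder at blocklength n: enc i m ss is X_{i+1} (0-indexed i < n) as a function
  of the message m and the past states ss = S^{i} (the first i states).
  Joint probability of (M, S^n, Y^n, Z^n) = (m, ss, ys, zs), with M uniform on {1..N}.\<close>
definition code_joint ::
  "('x \<Rightarrow> 's \<Rightarrow> 'y \<Rightarrow> 'z \<Rightarrow> real) \<Rightarrow> ('s \<Rightarrow> real) \<Rightarrow> nat \<Rightarrow> nat
   \<Rightarrow> (nat \<Rightarrow> nat \<Rightarrow> 's list \<Rightarrow> 'x) \<Rightarrow> nat \<Rightarrow> 's list \<Rightarrow> 'y list \<Rightarrow> 'z list \<Rightarrow> real" where
  "code_joint W Q N n enc m ss ys zs =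
     (1 / real N) * (\<Prod>i<n. Q (ss ! i) * W (enc i m (take i ss)) (ss ! i) (ys ! i) (zs ! i))"

definition error_prob ::
  "('x \<Rightarrow> 's \<Rightarrow> 'y \<Rightarrow> 'z \<Rightarrow> real) \<Rightarrow> ('s \<Rightarrow> real) \<Rightarrow> nat \<Rightarrow> nat
   \<Rightarrow> (nat \<Rightarrow> nat \<Rightarrow> 's list \<Rightarrow> 'x) \<Rightarrow> ('y list \<Rightarrow> nat) \<Rightarrow> real" where
  "error_prob W Q N n enc dec =
     (\<Sum>m\<in>{1..N}. \<Sum>ss\<in>seqs n. \<Sum>ys\<in>seqs n. \<Sum>zs\<in>seqs n.
        if dec ys \<noteq> m then code_joint W Q N n enc m ss ys zs else 0)"

definition warden_dist ::
  "('x \<Rightarrow> 's \<Rightarrow> 'y \<Rightarrow> 'z \<Rightarrow> real) \<Rightarrow> ('s \<Rightarrow> real) \<Rightarrow> nat \<Rightarrow> nat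
   \<Rightarrow> (nat \<Rightarrow> nat \<Rightarrow> 's list \<Rightarrow> 'x) \<Rightarrow> 'z list \<Rightarrow> real" where
  "warden_dist W Q N n enc zs =
     (\<Sum>m\<in>{1..N}. \<Sum>ss\<in>seqs n. \<Sum>ys\<in>seqs n. code_joint W Q N n enc m ss ys zs)"

definition Q0_prod ::
  "('x \<Rightarrow> 's \<Rightarrow> 'y \<Rightarrow> 'z \<Rightarrow> real) \<Rightarrow> ('s \<Rightarrow> real) \<Rightarrow> 'x \<Rightarrow> nat \<Rightarrow> 'z list \<Rightarrow> real" where
  "Q0_prod W Q x0 n zs = (\<Prod>i<n. Q0 W Q x0 (zs ! i))"

definition covert_achievable_SCT ::
  "('x::finite \<Rightarrow> 's::finite \<Rightarrow> 'y::finite \<Rightarrow> 'z::finite \<Rightarrow> real) \<Rightarrow> ('s \<Rightarrow> real) \<Rightarrow> 'x \<Rightarrow> real \<Rightarrow> bool" where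
  "covert_achievable_SCT W Q x0 R \<longleftrightarrow> 0 \<le> R \<and>
     (\<exists>(enc :: nat \<Rightarrow> nat \<Rightarrow> nat \<Rightarrow> 's list \<Rightarrow> 'x) (dec :: nat \<Rightarrow> 'y list \<Rightarrow> nat).
        (\<lambda>n. error_prob W Q (num_msgs R n) n (enc n) (dec n)) \<longlonglongrightarrow> 0 \<and>
        (\<lambda>n. kl_div (seqs n) (warden_dist W Q (num_msgs R n) n (enc n)) (Q0_prod W Q x0 n))
           \<longlonglongrightarrow> 0)"

definition covert_capacity_SCT ::
  "('x::finite \<Rightarrow> 's::finite \<Rightarrow> 'y::finite \<Rightarrow> 'z::finite \<Rightarrow> real) \<Rightarrow> ('s \<Rightarrow> real) \<Rightarrow> 'x \<Rightarrow> real" where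
  "covert_capacity_SCT W Q x0 = Sup {R. covert_achievable_SCT W Q x0 R}"

text \<open>Auxiliary alphabet: V ranges over {..<CARD('x)} (any alphabet with |V| \<le> |X| embeds into it).
  PV is P_V, PXV v x is P_{X|V}(x|v). The joint pmf is Q_S(s) P_V(v) P_{X|V}(x|v) W(y,z|x,s).\<close>
definition joint_SVXYZ ::
  "('x \<Rightarrow> 's \<Rightarrow> 'y \<Rightarrow> 'z \<Rightarrow> real) \<Rightarrow> ('s \<Rightarrow> real) \<Rightarrow> (nat \<Rightarrow> real) \<Rightarrow> (nat \<Rightarrow> 'x \<Rightarrow> real)
   \<Rightarrow> 's \<Rightarrow> nat \<Rightarrow> 'x \<Rightarrow> 'y \<Rightarrow> 'z \<Rightarrow> real" where
  "joint_SVXYZ W Q PV PXV s v x y z = Q s * PV v * PXV v x * W x s y z"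

definition aux_alph :: "'x::finite itself \<Rightarrow> nat set" where
  "aux_alph (t :: 'x itself) = {..<card (UNIV :: 'x set)}"

definition P_XY where
  "P_XY W Q PV PXV x y =
     (\<Sum>s\<in>UNIV. \<Sum>v\<in>aux_alph TYPE('x::finite). \<Sum>z\<in>UNIV. joint_SVXYZ W Q PV PXV s v (x::'x) y z)"

definition P_VZ where
  "P_VZ W Q PV (PXV :: nat \<Rightarrow> 'x::finite \<Rightarrow> real) v z =
     (\<Sum>s\<in>UNIV. \<Sum>x\<in>UNIV. \<Sum>y\<in>UNIV. joint_SVXYZ W Q PV PXV s v x y z)"

definition P_Z where
  "P_Z W Q PV (PXV :: nat \<Rightarrow> 'x::finite \<Rightarrow> real) z =
     (\<Sum>v\<in>aux_alph TYPE('x). P_VZ W Q PV PXV v z)"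

definition in_D_SCT ::
  "('x::finite \<Rightarrow> 's::finite \<Rightarrow> 'y::finite \<Rightarrow> 'z::finite \<Rightarrow> real) \<Rightarrow> ('s \<Rightarrow> real) \<Rightarrow> 'x
   \<Rightarrow> (nat \<Rightarrow> real) \<Rightarrow> (nat \<Rightarrow> 'x \<Rightarrow> real) \<Rightarrow> bool" where
  "in_D_SCT W Q x0 PV PXV \<longleftrightarrow>
     is_pmf_on (aux_alph TYPE('x)) PV \<and>
     (\<forall>v\<in>aux_alph TYPE('x). is_pmf_on UNIV (PXV v)) \<and>
     (\<forall>z. P_Z W Q PV PXV z = Q0 W Q x0 z) \<and>
     mutual_info UNIV UNIV (P_XY W Q PV PXV) \<ge> mutual_info (aux_alph TYPE('x)) UNIV (P_VZ W Q PV PXV)"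

definition rate_set_SCT ::
  "('x::finite \<Rightarrow> 's::finite \<Rightarrow> 'y::finite \<Rightarrow> 'z::finite \<Rightarrow> real) \<Rightarrow> ('s \<Rightarrow> real) \<Rightarrow> 'x \<Rightarrow> real set" where
  "rate_set_SCT W Q x0 = {R. 0 \<le> R \<and> (\<exists>PV PXV. in_D_SCT W Q x0 PV PXV \<and>
       R \<le> mutual_info UNIV UNIV (P_XY W Q PV PXV))}"

end

theory Submission
  imports Defs "HOL-Analysis.Analysis" "HOL-Real_Asymp.Real_Asymp"
begin

lemma finite_seqs[simp]: "finite (seqs n :: 'a::finite list set)"
proof -
  have "seqs n = {xs. set xs \<subseteq> (UNIV::'a set) \<and> length xs = n}" by (auto simp: seqs_def)
  then show ?thesis using finite_lists_length_eq[of "UNIV::'a set" n] by simp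
qed

lemma seqs_Suc: "seqs (Suc n) = (\<lambda>(xs,a). xs @ [a]) ` (seqs n \<times> UNIV)"
  unfolding seqs_def
proof (safe, goal_cases)
  case (1 xs)
  then have "xs \<noteq> []" by auto
  then have "xs = butlast xs @ [last xs]" by simp
  moreover have "length (butlast xs) = n" using 1 by simp
  ultimately show ?case
    by (intro image_eqI[where x="(butlast xs, last xs)"]) auto
qed auto

lemma inj_snoc: "inj_on (\<lambda>(xs,a). xs @ [a]) X"
  by (auto simp: inj_on_def)

lemma sum_seqs_Suc:
  fixes g :: "'a::finite list \<Rightarrow> 'b::comm_monoid_add"
  shows "(\<Sum>xs\<in>seqs (Suc n). g xs) = (\<Sum>xs\<in>seqs n. \<Sum>a\<in>UNIV. g (xs @ [a]))"
proof -
  have "(\<Sum>xs\<in>seqs n. \<Sum>a\<in>UNIV. g (xs @ [a])) = (\<Sum>(xs,a)\<in>seqs n \<times> UNIV. g (xs @ [a]))"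
    by (rule sum.cartesian_product)
  also have "\<dots> = sum g ((\<lambda>(xs,a). xs @ [a]) ` (seqs n \<times> UNIV))"
    by (subst sum.reindex[OF inj_snoc]) (simp add: case_prod_beta o_def)
  finally show ?thesis by (simp add: seqs_Suc)
qed

lemma seqs_0: "seqs 0 = {[]}" by (auto simp: seqs_def)

lemma in_seqs[simp]: "xs \<in> seqs n \<longleftrightarrow> length xs = n" by (simp add: seqs_def)

lemma sum_seqs_prod:
  fixes f :: "nat \<Rightarrow> 'a::finite \<Rightarrow> 'b::comm_semiring_1"
  shows "(\<Sum>xs\<in>seqs n. \<Prod>i<n. f i (xs!i)) = (\<Prod>i<n. \<Sum>a\<in>UNIV. f i a)"
proof (induction n)
  case 0 then show ?case by (simp add: seqs_0)
next
  case (Suc n)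
  have "(\<Sum>xs\<in>seqs (Suc n). \<Prod>i<Suc n. f i (xs!i))
      = (\<Sum>xs\<in>seqs n. \<Sum>a\<in>UNIV. (\<Prod>i<n. f i (xs!i)) * f n a)"
    unfolding sum_seqs_Suc
    by (intro sum.cong refl) (auto simp: lessThan_Suc nth_append intro!: prod.cong simp: mult.commute)
  also have "\<dots> = (\<Sum>xs\<in>seqs n. \<Prod>i<n. f i (xs!i)) * (\<Sum>a\<in>UNIV. f n a)"
    by (rule sum_product[symmetric])
  finally show ?case using Suc by (simp add: lessThan_Suc mult.commute)
qed

lemma logsum_term:
  fixes a b A B :: real
  assumes "0 \<le> a" "0 \<le> b" "b = 0 \<longrightarrow> a = 0" "0 < A" "0 < B"
  shows "a - b * A / B \<le> a * ln (a / b) - a * ln (A / B)"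
proof (cases "a = 0")
  case True then show ?thesis using assms by simp
next
  case False
  then have a: "a > 0" and b: "b > 0" using assms by auto
  have x: "0 < b * A / (a * B)" using a b assms by simp
  have "a * ln (a / b) - a * ln (A / B) = - a * ln (b * A / (a * B))"
    using a b assms by (simp add: ln_div ln_mult algebra_simps)
  also have "\<dots> \<ge> - a * (b * A / (a * B) - 1)"
    using ln_le_minus_one[OF x] a by (simp add: mult_left_mono)
  moreover have "- a * (b * A / (a * B) - 1) = a - b * A / B" using a assms by (simp add: field_simps)
  ultimately show ?thesis by linarith
qed

lemma logsum_ln:
  fixes a b :: "'i \<Rightarrow> real"
  assumes fin: "finite S" and a: "\<And>s. s \<in> S \<Longrightarrow> 0 \<le> a s" and b: "\<And>s. s \<in> S \<Longrightarrow> 0 \<le> b s"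
    and ab: "\<And>s. s \<in> S \<Longrightarrow> b s = 0 \<Longrightarrow> a s = 0"
  shows "(\<Sum>s\<in>S. a s) * ln ((\<Sum>s\<in>S. a s) / (\<Sum>s\<in>S. b s)) \<le> (\<Sum>s\<in>S. a s * ln (a s / b s))"
proof (cases "(\<Sum>s\<in>S. a s) = 0")
  case True
  then have "\<forall>s\<in>S. a s = 0" using sum_nonneg_eq_0_iff[OF fin] a by blast
  then show ?thesis using True by simp
next
  case False
  define A where "A = (\<Sum>s\<in>S. a s)"
  define B where "B = (\<Sum>s\<in>S. b s)"
  have A: "A > 0" using False a sum_nonneg[of S a] unfolding A_def by force
  obtain s0 where "s0 \<in> S" "a s0 \<noteq> 0" using False by (meson sum.neutral)
  then have "b s0 > 0" using ab b[of s0] by force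
  then have B: "B > 0" unfolding B_def using b fin \<open>s0 \<in> S\<close>
    by (metis sum_pos2)
  have "(\<Sum>s\<in>S. a s - b s * A / B) \<le> (\<Sum>s\<in>S. a s * ln (a s / b s) - a s * ln (A / B))"
    by (intro sum_mono logsum_term) (use a b ab A B in auto)
  moreover have "(\<Sum>s\<in>S. a s - b s * A / B) = 0"
    using B by (simp add: sum_subtractf sum_divide_distrib[symmetric] sum_distrib_right[symmetric] A_def B_def)
  ultimately show ?thesis
    by (simp add: sum_subtractf sum_distrib_right[symmetric] A_def B_def)
qed

lemma logsum:
  fixes a b :: "'i \<Rightarrow> real"
  assumes fin: "finite S" and a: "\<And>s. s \<in> S \<Longrightarrow> 0 \<le> a s" and b: "\<And>s. s \<in> S \<Longrightarrow> 0 \<le> b s"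
    and ab: "\<And>s. s \<in> S \<Longrightarrow> b s = 0 \<Longrightarrow> a s = 0"
  shows "(\<Sum>s\<in>S. a s) * log 2 ((\<Sum>s\<in>S. a s) / (\<Sum>s\<in>S. b s)) \<le> (\<Sum>s\<in>S. a s * log 2 (a s / b s))"
  using divide_right_mono[OF logsum_ln[OF assms], where c="ln 2"]
  by (simp add: log_def sum_divide_distrib)

definition S3 :: "nat \<Rightarrow> ('s::finite list \<Rightarrow> 'y::finite list \<Rightarrow> 'z::finite list \<Rightarrow> real) \<Rightarrow> real" where
  "S3 k g = (\<Sum>ss\<in>seqs k. \<Sum>ys\<in>seqs k. \<Sum>zs\<in>seqs k. g ss ys zs)"

lemma S3_Suc: "S3 (Suc k) g = S3 k (\<lambda>ss ys zs. \<Sum>s\<in>UNIV. \<Sum>y\<in>UNIV. \<Sum>z\<in>UNIV. g (ss@[s]) (ys@[y]) (zs@[z]))"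
proof -
  have "S3 (Suc k) g = (\<Sum>ss\<in>seqs k. \<Sum>s\<in>UNIV. \<Sum>ys\<in>seqs k. \<Sum>y\<in>UNIV. \<Sum>zs\<in>seqs k. \<Sum>z\<in>UNIV. g (ss@[s]) (ys@[y]) (zs@[z]))"
    unfolding S3_def sum_seqs_Suc ..
  also have "\<dots> = (\<Sum>ss\<in>seqs k. \<Sum>s\<in>UNIV. \<Sum>ys\<in>seqs k. \<Sum>zs\<in>seqs k. \<Sum>y\<in>UNIV. \<Sum>z\<in>UNIV. g (ss@[s]) (ys@[y]) (zs@[z]))"
    by (intro sum.cong refl, rule sum.swap)
  also have "\<dots> = (\<Sum>ss\<in>seqs k. \<Sum>ys\<in>seqs k. \<Sum>s\<in>UNIV. \<Sum>zs\<in>seqs k. \<Sum>y\<in>UNIV. \<Sum>z\<in>UNIV. g (ss@[s]) (ys@[y]) (zs@[z]))"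
    by (intro sum.cong refl, rule sum.swap)
  also have "\<dots> = (\<Sum>ss\<in>seqs k. \<Sum>ys\<in>seqs k. \<Sum>zs\<in>seqs k. \<Sum>s\<in>UNIV. \<Sum>y\<in>UNIV. \<Sum>z\<in>UNIV. g (ss@[s]) (ys@[y]) (zs@[z]))"
    by (intro sum.cong refl, rule sum.swap)
  finally show ?thesis unfolding S3_def .
qed

lemma S3_cong: "(\<And>ss ys zs. length ss = k \<Longrightarrow> length ys = k \<Longrightarrow> length zs = k \<Longrightarrow> g ss ys zs = h ss ys zs)
   \<Longrightarrow> S3 k g = S3 k h"
  unfolding S3_def by (intro sum.cong refl) auto

lemma S3_mono: "(\<And>ss ys zs. length ss = k \<Longrightarrow> length ys = k \<Longrightarrow> length zs = k \<Longrightarrow> g ss ys zs \<le> h ss ys zs)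
   \<Longrightarrow> S3 k g \<le> S3 k h"
  unfolding S3_def by (intro sum_mono) auto

lemma S3_add: "S3 k (\<lambda>ss ys zs. g ss ys zs + h ss ys zs) = S3 k g + S3 k h"
  unfolding S3_def by (simp add: sum.distrib)

lemma S3_cmult: "S3 k (\<lambda>ss ys zs. c * g ss ys zs) = c * S3 k g"
  unfolding S3_def by (simp add: sum_distrib_left)

lemma S3_sum: "finite A \<Longrightarrow> S3 k (\<lambda>ss ys zs. \<Sum>a\<in>A. g a ss ys zs) = (\<Sum>a\<in>A. S3 k (g a))"
  unfolding S3_def
  by (subst sum.swap, rule sum.cong[OF refl], subst sum.swap, rule sum.cong[OF refl], subst sum.swap, rule refl)

lemma S3_0: "S3 0 g = g [] [] []" unfolding S3_def by (simp add: seqs_0)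

locale chan =
  fixes W :: "'x::finite \<Rightarrow> 's::finite \<Rightarrow> 'y::finite \<Rightarrow> 'z::finite \<Rightarrow> real"
    and Q :: "'s \<Rightarrow> real"
  assumes Wnn: "\<And>x s y z. 0 \<le> W x s y z"
    and Qnn: "\<And>s. 0 \<le> Q s"
    and Qsum: "(\<Sum>s\<in>UNIV. Q s) = 1"
    and Wsum: "\<And>x s. (\<Sum>y\<in>UNIV. \<Sum>z\<in>UNIV. W x s y z) = 1"
begin

definition F :: "(nat \<Rightarrow> 's list \<Rightarrow> 'x) \<Rightarrow> nat \<Rightarrow> 's list \<Rightarrow> 'y list \<Rightarrow> 'z list \<Rightarrow> real" where
  "F e k ss ys zs = (\<Prod>i<k. Q (ss!i) * W (e i (take i ss)) (ss!i) (ys!i) (zs!i))"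

lemma F_nn: "0 \<le> F e k ss ys zs"
  unfolding F_def by (intro prod_nonneg) (auto intro: mult_nonneg_nonneg Qnn Wnn)

lemma F_snoc: "length ss = k \<Longrightarrow> F e (Suc k) (ss@[s]) (ys@[y]) (zs@[z])
   = F e k ss ys zs * (Q s * W (e k ss) s y z)" if "length ys = k" "length zs = k"
  unfolding F_def using that by (auto simp: lessThan_Suc nth_append intro!: prod.cong)

lemma F_0: "F e 0 ss ys zs = 1" by (simp add: F_def)

lemma norm1: "(\<Sum>s\<in>UNIV. \<Sum>y\<in>UNIV. \<Sum>z\<in>UNIV. Q s * W x s y z) = 1"
  using Qsum Wsum by (simp add: sum_distrib_left[symmetric])

lemma F_marg:
  assumes "k \<le> n"
  shows "S3 n (\<lambda>ss ys zs. F e n ss ys zs * h (take k ss) (take k ys) (take k zs))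
       = S3 k (\<lambda>ss ys zs. F e k ss ys zs * h ss ys zs)"
  using assms
proof (induction n)
  case 0 then have "k = 0" by simp
  then show ?case by (simp add: S3_0)
next
  case (Suc n)
  show ?case
  proof (cases "k = Suc n")
    case True
    then show ?thesis unfolding True by (intro S3_cong) simp
  next
    case False
    then have kn: "k \<le> n" using Suc by simp
    have "S3 (Suc n) (\<lambda>ss ys zs. F e (Suc n) ss ys zs * h (take k ss) (take k ys) (take k zs))
       = S3 n (\<lambda>ss ys zs. \<Sum>s\<in>UNIV. \<Sum>y\<in>UNIV. \<Sum>z\<in>UNIV. 
            F e n ss ys zs * h (take k ss) (take k ys) (take k zs) * (Q s * W (e n ss) s y z))"
      unfolding S3_Suc
      by (intro S3_cong sum.cong refl) (use kn in \<open>simp add: F_snoc\<close>)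
    also have "\<dots> = S3 n (\<lambda>ss ys zs. F e n ss ys zs * h (take k ss) (take k ys) (take k zs))"
      by (intro S3_cong) (simp add: sum_distrib_left[symmetric] Wsum Qsum)
    finally show ?thesis using Suc.IH[OF kn] by simp
  qed
qed

lemma F_total: "S3 n (F e n) = 1"
  using F_marg[of 0 n e "\<lambda>_ _ _. 1"] by (simp add: S3_0 F_0)


definition Wt :: "'x \<Rightarrow> 'y \<Rightarrow> real" where
  "Wt x y = (\<Sum>s\<in>UNIV. Q s * (\<Sum>z\<in>UNIV. W x s y z))"
definition Wz :: "'x \<Rightarrow> 'z \<Rightarrow> real" where
  "Wz x z = (\<Sum>s\<in>UNIV. Q s * (\<Sum>y\<in>UNIV. W x s y z))"
definition PY :: "(nat \<Rightarrow> 's list \<Rightarrow> 'x) \<Rightarrow> nat \<Rightarrow> 'y list \<Rightarrow> real" where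
  "PY e k ys = (\<Sum>ss\<in>seqs k. \<Sum>zs\<in>seqs k. F e k ss ys zs)"
definition PX :: "(nat \<Rightarrow> 's list \<Rightarrow> 'x) \<Rightarrow> nat \<Rightarrow> 'x \<Rightarrow> real" where
  "PX e k x = S3 k (\<lambda>ss ys zs. F e k ss ys zs * (if e k ss = x then 1 else 0))"
definition DR :: "('y \<Rightarrow> real) \<Rightarrow> 'x \<Rightarrow> real" where
  "DR R x = (\<Sum>y\<in>UNIV. Wt x y * log 2 (Wt x y / R y))"
definition prodR :: "('y \<Rightarrow> real) \<Rightarrow> nat \<Rightarrow> 'y list \<Rightarrow> real" where
  "prodR R k ys = (\<Prod>i<k. R (ys!i))"

lemma Wt_nn: "0 \<le> Wt x y" unfolding Wt_def by (auto intro!: sum_nonneg mult_nonneg_nonneg Qnn Wnn)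
lemma Wz_nn: "0 \<le> Wz x z" unfolding Wz_def by (auto intro!: sum_nonneg mult_nonneg_nonneg Qnn Wnn)
lemma Wt_sum: "(\<Sum>y\<in>UNIV. Wt x y) = 1"
  unfolding Wt_def by (subst sum.swap) (simp add: sum_distrib_left[symmetric] Wsum Qsum)
lemma Wz_sum: "(\<Sum>z\<in>UNIV. Wz x z) = 1"
proof -
  have "(\<Sum>z\<in>UNIV. Wz x z) = (\<Sum>s\<in>UNIV. Q s * (\<Sum>z\<in>UNIV. \<Sum>y\<in>UNIV. W x s y z))"
    unfolding Wz_def by (subst sum.swap) (simp add: sum_distrib_left)
  also have "\<dots> = (\<Sum>s\<in>UNIV. Q s * (\<Sum>y\<in>UNIV. \<Sum>z\<in>UNIV. W x s y z))"
    by (intro sum.cong refl arg_cong[where f="\<lambda>t. Q _ * t"] sum.swap)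
  finally show ?thesis by (simp add: Wsum Qsum)
qed
lemma PY_nn: "0 \<le> PY e k ys" unfolding PY_def by (intro sum_nonneg F_nn)
lemma PX_nn: "0 \<le> PX e k x" unfolding PX_def S3_def by (intro sum_nonneg) (simp add: F_nn)

lemma PX_sum: "(\<Sum>x\<in>UNIV. PX e k x) = 1"
proof -
  have "(\<Sum>x\<in>UNIV. PX e k x) = S3 k (\<lambda>ss ys zs. \<Sum>x\<in>UNIV. F e k ss ys zs * (if e k ss = x then 1 else 0))"
    unfolding PX_def by (rule S3_sum[symmetric]) simp
  also have "\<dots> = S3 k (F e k)" by (intro S3_cong) (simp add: if_distrib cong: if_cong)
  finally show ?thesis using F_total by simp
qed

lemma sum_ind_mult: fixes a :: "'a::finite" shows "(\<Sum>x\<in>UNIV. c * (if a = x then 1 else 0) * g x) = (c::real) * g a"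
proof -
  have "(\<Sum>x\<in>UNIV. c * (if a = x then 1 else 0) * g x) = (\<Sum>x\<in>UNIV. if a = x then c * g x else 0)"
    by (intro sum.cong) auto
  then show ?thesis by (simp add: sum.delta')
qed

lemma S3_PX: "S3 k (\<lambda>ss ys zs. F e k ss ys zs * g (e k ss)) = (\<Sum>x\<in>UNIV. PX e k x * g x)"
proof -
  have "S3 k (\<lambda>ss ys zs. F e k ss ys zs * g (e k ss))
     = S3 k (\<lambda>ss ys zs. \<Sum>x\<in>UNIV. F e k ss ys zs * (if e k ss = x then 1 else 0) * g x)"
    by (intro S3_cong) (simp only: sum_ind_mult)
  also have "\<dots> = (\<Sum>x\<in>UNIV. S3 k (\<lambda>ss ys zs. F e k ss ys zs * (if e k ss = x then 1 else 0)) * g x)"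
    by (subst S3_sum) (auto simp: S3_def sum_distrib_right)
  finally show ?thesis unfolding PX_def .
qed

lemma PY_snoc:
  assumes "length ys = k"
  shows "PY e (Suc k) (ys@[y]) = (\<Sum>ss\<in>seqs k. \<Sum>zs\<in>seqs k. F e k ss ys zs * Wt (e k ss) y)"
proof -
  have "PY e (Suc k) (ys@[y]) = (\<Sum>ss\<in>seqs k. \<Sum>s\<in>UNIV. \<Sum>zs\<in>seqs k. \<Sum>z\<in>UNIV. F e k ss ys zs * (Q s * W (e k ss) s y z))"
    unfolding PY_def sum_seqs_Suc using assms by (intro sum.cong refl) (simp add: F_snoc)
  also have "\<dots> = (\<Sum>ss\<in>seqs k. \<Sum>zs\<in>seqs k. \<Sum>s\<in>UNIV. \<Sum>z\<in>UNIV. F e k ss ys zs * (Q s * W (e k ss) s y z))"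
    by (intro sum.cong refl, rule sum.swap)
  also have "\<dots> = (\<Sum>ss\<in>seqs k. \<Sum>zs\<in>seqs k. F e k ss ys zs * Wt (e k ss) y)"
    unfolding Wt_def by (simp add: sum_distrib_left mult.assoc)
  finally show ?thesis .
qed

lemma PY_snoc_sum:
  assumes "length ys = k"
  shows "(\<Sum>y\<in>UNIV. PY e (Suc k) (ys@[y])) = PY e k ys"
proof -
  have "(\<Sum>y\<in>UNIV. PY e (Suc k) (ys@[y])) = (\<Sum>ss\<in>seqs k. \<Sum>zs\<in>seqs k. F e k ss ys zs * (\<Sum>y\<in>UNIV. Wt (e k ss) y))"
    unfolding PY_snoc[OF assms] sum_distrib_left
    by (subst sum.swap, rule sum.cong[OF refl], subst sum.swap, rule refl)
  then show ?thesis by (simp add: Wt_sum PY_def)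
qed

lemma PY_zero:
  assumes "length ys = k" "PY e k ys = 0"
  shows "PY e (Suc k) (ys@[y]) = 0"
proof -
  have "\<forall>ss\<in>seqs k. \<forall>zs\<in>seqs k. F e k ss ys zs = 0"
    using assms(2) unfolding PY_def
    by (subst (asm) sum_nonneg_eq_0_iff) (auto simp: sum_nonneg_eq_0_iff F_nn sum_nonneg)
  then show ?thesis by (simp add: PY_snoc[OF assms(1)])
qed

lemma chain:
  assumes Rpos: "\<And>y. 0 < R y"
  shows "(\<Sum>ys\<in>seqs n. PY e n ys * log 2 (PY e n ys / prodR R n ys)) \<le> (\<Sum>k<n. \<Sum>x\<in>UNIV. PX e k x * DR R x)"
proof (induction n)
  case 0
  then show ?case by (simp add: seqs_0 PY_def F_0 prodR_def)
next
  case (Suc n)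
  let ?P = "PY e n" and ?P' = "\<lambda>ys y. PY e (Suc n) (ys@[y])"
  have Rn: "0 < prodR R n ys" for ys unfolding prodR_def by (intro prod_pos) (simp add: Rpos)
  have prodR_snoc: "prodR R (Suc n) (ys@[y]) = prodR R n ys * R y" if "length ys = n" for ys y
    using that unfolding prodR_def by (auto simp: lessThan_Suc nth_append intro!: prod.cong)
  have split: "?P' ys y * log 2 (?P' ys y / prodR R (Suc n) (ys@[y]))
      = ?P' ys y * log 2 (?P' ys y / (?P ys * R y)) + ?P' ys y * log 2 (?P ys / prodR R n ys)"
    if ys: "length ys = n" for ys y
  proof (cases "?P' ys y = 0")
    case True then show ?thesis by simp
  next
    case False
    then have P'pos: "?P' ys y > 0" using PY_nn[of e "Suc n"] by (simp add: less_le)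
    have "?P ys \<noteq> 0" using PY_zero[OF ys] False by blast
    then have Ppos: "?P ys > 0" using PY_nn[of e n ys] by simp
    have "log 2 (?P' ys y / prodR R (Suc n) (ys@[y])) = log 2 (?P' ys y / (?P ys * R y)) + log 2 (?P ys / prodR R n ys)"
      using P'pos Ppos Rn[of ys] Rpos[of y] by (simp add: prodR_snoc[OF ys] log_divide log_mult)
    then show ?thesis by (simp add: distrib_left)
  qed
  have ls: "?P' ys y * log 2 (?P' ys y / (?P ys * R y))
     \<le> (\<Sum>ss\<in>seqs n. \<Sum>zs\<in>seqs n. F e n ss ys zs * (Wt (e n ss) y * log 2 (Wt (e n ss) y / R y)))"
    if ys: "length ys = n" for ys y
  proof -
    let ?a = "\<lambda>p. F e n (fst p) ys (snd p) * Wt (e n (fst p)) y"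
    let ?b = "\<lambda>p. F e n (fst p) ys (snd p) * R y"
    have A: "(\<Sum>p\<in>seqs n \<times> seqs n. ?a p) = ?P' ys y"
      by (simp add: PY_snoc[OF ys] sum.cartesian_product case_prod_beta)
    have B: "(\<Sum>p\<in>seqs n \<times> seqs n. ?b p) = ?P ys * R y"
      by (simp add: PY_def sum.cartesian_product case_prod_beta sum_distrib_right)
    have "(\<Sum>p\<in>seqs n \<times> seqs n. ?a p) * log 2 ((\<Sum>p\<in>seqs n \<times> seqs n. ?a p) / (\<Sum>p\<in>seqs n \<times> seqs n. ?b p))
       \<le> (\<Sum>p\<in>seqs n \<times> seqs n. ?a p * log 2 (?a p / ?b p))"
      by (rule logsum) (use Rpos[of y] less_imp_le[OF Rpos[of y]] in \<open>auto intro!: mult_nonneg_nonneg F_nn Wt_nn\<close>)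
    also have "\<dots> = (\<Sum>p\<in>seqs n \<times> seqs n. F e n (fst p) ys (snd p) * (Wt (e n (fst p)) y * log 2 (Wt (e n (fst p)) y / R y)))"
    proof (intro sum.cong refl)
      fix p
      show "?a p * log 2 (?a p / ?b p) = F e n (fst p) ys (snd p) * (Wt (e n (fst p)) y * log 2 (Wt (e n (fst p)) y / R y))"
        by (cases "F e n (fst p) ys (snd p) = 0") auto
    qed
    finally show ?thesis unfolding A B by (simp add: sum.cartesian_product case_prod_beta)
  qed
  have "(\<Sum>ys\<in>seqs (Suc n). PY e (Suc n) ys * log 2 (PY e (Suc n) ys / prodR R (Suc n) ys))
      = (\<Sum>ys\<in>seqs n. \<Sum>y\<in>UNIV. ?P' ys y * log 2 (?P' ys y / prodR R (Suc n) (ys@[y])))"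
    by (rule sum_seqs_Suc)
  also have "\<dots> = (\<Sum>ys\<in>seqs n. \<Sum>y\<in>UNIV. ?P' ys y * log 2 (?P' ys y / (?P ys * R y)))
       + (\<Sum>ys\<in>seqs n. (\<Sum>y\<in>UNIV. ?P' ys y) * log 2 (?P ys / prodR R n ys))"
    by (simp add: split sum.distrib sum_distrib_right)
  also have "(\<Sum>ys\<in>seqs n. (\<Sum>y\<in>UNIV. ?P' ys y) * log 2 (?P ys / prodR R n ys))
       = (\<Sum>ys\<in>seqs n. ?P ys * log 2 (?P ys / prodR R n ys))"
    by (intro sum.cong refl) (simp add: PY_snoc_sum)
  also have "(\<Sum>ys\<in>seqs n. \<Sum>y\<in>UNIV. ?P' ys y * log 2 (?P' ys y / (?P ys * R y)))
      \<le> (\<Sum>ys\<in>seqs n. \<Sum>y\<in>UNIV. \<Sum>ss\<in>seqs n. \<Sum>zs\<in>seqs n. F e n ss ys zs * (Wt (e n ss) y * log 2 (Wt (e n ss) y / R y)))"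
    by (intro sum_mono ls) simp
  also have "\<dots> = S3 n (\<lambda>ss ys zs. F e n ss ys zs * DR R (e n ss))"
  proof -
    have "(\<Sum>ys\<in>seqs n. \<Sum>y\<in>UNIV. \<Sum>ss\<in>seqs n. \<Sum>zs\<in>seqs n. F e n ss ys zs * (Wt (e n ss) y * log 2 (Wt (e n ss) y / R y)))
      = (\<Sum>ys\<in>seqs n. \<Sum>ss\<in>seqs n. \<Sum>zs\<in>seqs n. \<Sum>y\<in>UNIV. F e n ss ys zs * (Wt (e n ss) y * log 2 (Wt (e n ss) y / R y)))"
      by (intro sum.cong refl) (subst sum.swap, rule sum.cong[OF refl], rule sum.swap)
    also have "\<dots> = (\<Sum>ss\<in>seqs n. \<Sum>ys\<in>seqs n. \<Sum>zs\<in>seqs n. \<Sum>y\<in>UNIV. F e n ss ys zs * (Wt (e n ss) y * log 2 (Wt (e n ss) y / R y)))"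
      by (rule sum.swap)
    finally show ?thesis unfolding S3_def DR_def by (simp add: sum_distrib_left)
  qed
  also have "\<dots> = (\<Sum>x\<in>UNIV. PX e n x * DR R x)" by (rule S3_PX)
  finally show ?case using Suc.IH by simp
qed

lemma prodR_sum: "(\<Sum>y\<in>UNIV. R y) = 1 \<Longrightarrow> (\<Sum>ys\<in>seqs n. prodR R n ys) = 1"
  unfolding prodR_def using sum_seqs_prod[of "\<lambda>i a. R a" n] by simp

lemma prodR_pos: "(\<And>y. 0 < R y) \<Longrightarrow> 0 < prodR R n ys"
  unfolding prodR_def by (intro prod_pos) simp

lemma code_joint_F: "code_joint W Q N n enc m ss ys zs = (1 / real N) * F (\<lambda>i. enc i m) n ss ys zs"
  unfolding code_joint_def F_def ..

lemma error_prob_PY: "error_prob W Q N n enc dec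
   = (\<Sum>m\<in>{1..N}. \<Sum>ys\<in>seqs n. if dec ys \<noteq> m then PY (\<lambda>i. enc i m) n ys / real N else 0)"
proof -
  have "error_prob W Q N n enc dec = (\<Sum>m\<in>{1..N}. \<Sum>ys\<in>seqs n. \<Sum>ss\<in>seqs n. \<Sum>zs\<in>seqs n.
        if dec ys \<noteq> m then code_joint W Q N n enc m ss ys zs else 0)"
    unfolding error_prob_def by (intro sum.cong refl, rule sum.swap)
  also have "\<dots> = (\<Sum>m\<in>{1..N}. \<Sum>ys\<in>seqs n. if dec ys \<noteq> m then PY (\<lambda>i. enc i m) n ys / real N else 0)"
    by (intro sum.cong refl) (auto simp: PY_def code_joint_F sum_distrib_left sum_divide_distrib)
  finally show ?thesis .
qed

end

lemma ln2_ge_half: "ln (2::real) \<ge> 1/2"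
proof -
  have "ln (1/2::real) \<le> 1/2 - 1" by (rule ln_le_minus_one) simp
  then show ?thesis by (simp add: ln_div)
qed

lemma xlogx_lb: assumes "0 \<le> t" "t \<le> (1::real)" shows "-2 \<le> t * log 2 t"
proof (cases "t = 0")
  case True then show ?thesis by simp
next
  case False
  then have t: "t > 0" using assms by simp
  have "ln (1/t) \<le> 1/t - 1" by (rule ln_le_minus_one) (use t in simp)
  then have "- ln t \<le> 1/t - 1" using t by (simp add: ln_div)
  then have "t * (- ln t) \<le> t * (1/t - 1)" using t by (intro mult_left_mono) auto
  then have a: "t * ln t \<ge> t - 1" using t by (simp add: algebra_simps)
  have l2: "ln (2::real) > 0" by simp
  have "t * log 2 t = t * ln t / ln 2" by (simp add: log_def)
  also have "\<dots> \<ge> (t - 1) / ln 2" using a l2 by (intro divide_right_mono) auto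
  also have "(t - 1) / ln 2 \<ge> -1 / ln 2" using t l2 by (intro divide_right_mono) auto
  also have "-1 / ln 2 \<ge> (-2::real)" using ln2_ge_half l2 by (simp add: field_simps)
  finally show ?thesis by simp
qed

context chan begin

lemma fano:
  fixes enc :: "nat \<Rightarrow> nat \<Rightarrow> 's list \<Rightarrow> 'x" and dec :: "'y list \<Rightarrow> nat"
  assumes N: "N \<ge> 1" and Rpos: "\<And>y. R y > 0" and Rsum: "(\<Sum>y\<in>UNIV. R y) = 1"
  shows "(1 - error_prob W Q N n enc dec) * log 2 N - 4
     \<le> (\<Sum>m\<in>{1..N}. (1 / real N) * (\<Sum>ys\<in>seqs n. PY (\<lambda>i. enc i m) n ys * log 2 (PY (\<lambda>i. enc i m) n ys / prodR R n ys)))"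
proof -
  define G where "G = {1..N} \<times> (seqs n :: 'y list set)"
  define a where "a = (\<lambda>p. PY (\<lambda>i. enc i (fst p)) n (snd p) / real N)"
  define b where "b = (\<lambda>p::nat \<times> 'y list. prodR R n (snd p) / real N)"
  define C where "C = {p\<in>G. dec (snd p) = fst p}"
  define E where "E = {p\<in>G. dec (snd p) \<noteq> fst p}"
  have finG: "finite G" unfolding G_def by simp
  have finC: "finite C" "finite E" unfolding C_def E_def using finG by auto
  have Npos: "real N > 0" using N by simp
  have a_nn: "0 \<le> a p" for p unfolding a_def using PY_nn Npos by simp
  have b_pos: "0 < b p" for p unfolding b_def using prodR_pos[OF Rpos] Npos by simp
  have b_ne: "b p \<noteq> 0" for p using b_pos[of p] by simp
  have split: "(\<Sum>p\<in>G. f p) = (\<Sum>p\<in>C. f p) + (\<Sum>p\<in>E. f p)" for f :: "_ \<Rightarrow> real"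
    unfolding C_def E_def using finG by (simp add: sum.inter_filter sum.distrib[symmetric] if_distrib cong: if_cong)
     (intro sum.cong, auto)
  have rhs: "(\<Sum>m\<in>{1..N}. (1 / real N) * (\<Sum>ys\<in>seqs n. PY (\<lambda>i. enc i m) n ys * log 2 (PY (\<lambda>i. enc i m) n ys / prodR R n ys)))
     = (\<Sum>p\<in>G. a p * log 2 (a p / b p))"
    unfolding G_def a_def b_def using Npos
    by (simp add: sum.cartesian_product' sum_distrib_left)
  have Gsum: "(\<Sum>p\<in>G. a p) = 1"
  proof -
    have "(\<Sum>p\<in>G. a p) = (\<Sum>m\<in>{1..N}. (\<Sum>ys\<in>seqs n. PY (\<lambda>i. enc i m) n ys) / real N)"
      unfolding G_def a_def by (simp add: sum.cartesian_product' sum_divide_distrib)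
    also have "\<dots> = (\<Sum>m\<in>{1..N}. 1 / real N)"
    proof (intro sum.cong refl)
      fix m
      have "(\<Sum>ys\<in>seqs n. PY (\<lambda>i. enc i m) n ys) = S3 n (F (\<lambda>i. enc i m) n)"
        unfolding PY_def S3_def by (subst sum.swap) (rule refl)
      then show "(\<Sum>ys\<in>seqs n. PY (\<lambda>i. enc i m) n ys) / real N = 1 / real N" using F_total by simp
    qed
    finally show ?thesis using Npos by simp
  qed
  have Esum: "(\<Sum>p\<in>E. a p) = error_prob W Q N n enc dec"
    unfolding error_prob_PY E_def G_def a_def using finG
    apply (simp add: sum.inter_filter G_def sum.cartesian_product')
    apply (rule sum.cong[OF refl], rule sum.cong[OF refl])
    apply (simp only: fst_conv snd_conv)
    done
  define pc where "pc = (\<Sum>p\<in>C. a p)"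
  define pe where "pe = (\<Sum>p\<in>E. a p)"
  have pcpe: "pc + pe = 1" using Gsum split[of a] unfolding pc_def pe_def by simp
  have pc_nn: "0 \<le> pc" "0 \<le> pe" unfolding pc_def pe_def by (auto intro!: sum_nonneg a_nn)
  have bG: "(\<Sum>p\<in>G. b p) = 1"
    unfolding G_def b_def using Npos by (simp add: sum.cartesian_product' sum_divide_distrib[symmetric] prodR_sum[OF Rsum])
  have bC: "(\<Sum>p\<in>C. b p) \<le> 1 / real N"
  proof -
    have "(\<Sum>p\<in>C. b p) = (\<Sum>p\<in>G. if dec (snd p) = fst p then b p else 0)"
      unfolding C_def using finG by (simp add: sum.inter_filter)
    also have "\<dots> = (\<Sum>ys\<in>seqs n. (\<Sum>m\<in>{1..N}. if dec ys = m then 1 else 0) * (prodR R n ys / real N))"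
      unfolding G_def b_def sum.cartesian_product' sum_distrib_right
      by (subst sum.swap) (rule sum.cong[OF refl], rule sum.cong[OF refl], simp)
    also have "\<dots> \<le> (\<Sum>ys\<in>seqs n. 1 * (prodR R n ys / real N))"
      using prodR_pos[OF Rpos] Npos
      by (intro sum_mono mult_right_mono) (auto simp: sum.delta' intro: less_imp_le)
    also have "\<dots> = 1 / real N" using prodR_sum[OF Rsum] by (simp add: sum_divide_distrib[symmetric])
    finally show ?thesis .
  qed
  have "0 \<le> (\<Sum>p\<in>C. b p)" using b_pos by (intro sum_nonneg) (simp add: less_imp_le)
  then have bE: "(\<Sum>p\<in>E. b p) \<le> 1" using bG split[of b] by linarith
  have lsC: "pc * log 2 (pc / (\<Sum>p\<in>C. b p)) \<le> (\<Sum>p\<in>C. a p * log 2 (a p / b p))"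
    unfolding pc_def by (rule logsum[OF finC(1)]) (simp_all add: a_nn b_ne less_imp_le[OF b_pos])
  have lsE: "pe * log 2 (pe / (\<Sum>p\<in>E. b p)) \<le> (\<Sum>p\<in>E. a p * log 2 (a p / b p))"
    unfolding pe_def by (rule logsum[OF finC(2)]) (simp_all add: a_nn b_ne less_imp_le[OF b_pos])
  have lbC: "pc * log 2 N - 2 \<le> pc * log 2 (pc / (\<Sum>p\<in>C. b p))"
  proof (cases "pc = 0")
    case True then show ?thesis by simp
  next
    case False
    then have pcp: "pc > 0" using pc_nn by simp
    then have "C \<noteq> {}" unfolding pc_def by auto
    then have bCp: "(\<Sum>p\<in>C. b p) > 0" using finC(1) b_pos by (intro sum_pos) auto
    have "pc * real N \<le> pc / (\<Sum>p\<in>C. b p)"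
      using bC bCp pcp Npos by (simp add: field_simps)
    then have "log 2 (pc * real N) \<le> log 2 (pc / (\<Sum>p\<in>C. b p))"
      using pcp Npos bCp by (intro log_le_cancel_iff[THEN iffD2]) auto
    then have "pc * log 2 (pc * real N) \<le> pc * log 2 (pc / (\<Sum>p\<in>C. b p))"
      using pcp by (intro mult_left_mono) auto
    moreover have "pc * log 2 (pc * real N) = pc * log 2 pc + pc * log 2 N"
      using pcp Npos by (simp add: log_mult distrib_left)
    moreover have "-2 \<le> pc * log 2 pc" using pcpe pc_nn by (intro xlogx_lb) auto
    ultimately show ?thesis by linarith
  qed
  have lbE: "- 2 \<le> pe * log 2 (pe / (\<Sum>p\<in>E. b p))"
  proof (cases "pe = 0")
    case True then show ?thesis by simp
  next
    case False
    then have pep: "pe > 0" using pc_nn by simp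
    then have "E \<noteq> {}" unfolding pe_def by auto
    then have bEp: "(\<Sum>p\<in>E. b p) > 0" using finC(2) b_pos by (intro sum_pos) auto
    have "pe \<le> pe / (\<Sum>p\<in>E. b p)"
      using bE bEp pep by (simp add: field_simps)
    then have "log 2 pe \<le> log 2 (pe / (\<Sum>p\<in>E. b p))"
      using pep bEp by (intro log_le_cancel_iff[THEN iffD2]) auto
    then have "pe * log 2 pe \<le> pe * log 2 (pe / (\<Sum>p\<in>E. b p))"
      using pep by (intro mult_left_mono) auto
    moreover have "-2 \<le> pe * log 2 pe" using pcpe pc_nn by (intro xlogx_lb) auto
    ultimately show ?thesis by linarith
  qed
  have eq: "(1 - error_prob W Q N n enc dec) = pc" using pcpe Esum unfolding pe_def by simp
  show ?thesis unfolding rhs split[of "\<lambda>p. a p * log 2 (a p / b p)"] eq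
    using lsC lsE lbC lbE by linarith
qed
end


lemma eta_cont: "continuous_on {0..} (\<lambda>t::real. t * log 2 t)"
  unfolding continuous_on_def
proof (intro ballI)
  fix x :: real assume "x \<in> {0..}"
  show "((\<lambda>t. t * log 2 t) \<longlongrightarrow> x * log 2 x) (at x within {0..})"
  proof (cases "x = 0")
    case True
    have "((\<lambda>t::real. t * log 2 t) \<longlongrightarrow> 0) (at_right 0)" by real_asymp
    then show ?thesis using True by (simp add: at_within_Ici_at_right)
  next
    case False
    then have "x > 0" using \<open>x \<in> {0..}\<close> by simp
    then have "isCont (\<lambda>t. t * log 2 t) x" by (intro continuous_intros) auto
    then have "continuous (at x within {0..}) (\<lambda>t. t * log 2 t)"
      by (rule continuous_at_imp_continuous_within)
    then show ?thesis by (simp add: continuous_within)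
  qed
qed

lemma hell_term:
  fixes p q :: real
  assumes "0 \<le> p" "0 < q"
  shows "(sqrt p - sqrt q)^2 + p - q \<le> p * ln (p / q)"
proof (cases "p = 0")
  case True then show ?thesis using assms by (simp add: power2_eq_square)
next
  case False
  define a where "a = sqrt p"
  define b where "b = sqrt q"
  have a: "a > 0" "a^2 = p" using False assms unfolding a_def by auto
  have b: "b > 0" "b^2 = q" using assms unfolding b_def by auto
  have "ln (b / a) \<le> b / a - 1" by (rule ln_le_minus_one) (use a b in simp)
  have "p * ln (p / q) = 2 * a^2 * ln (a / b)"
    using a b by (simp add: ln_div ln_mult power2_eq_square flip: a(2) b(2))
  also have "ln (a / b) = - ln (b / a)" using a b by (simp add: ln_div)
  finally have eq: "p * ln (p / q) = - 2 * a^2 * ln (b / a)" by simp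
  have "- 2 * a^2 * ln (b / a) \<ge> - 2 * a^2 * (b / a - 1)"
    using \<open>ln (b / a) \<le> b / a - 1\<close> a by (intro mult_left_mono_neg) auto
  moreover have "- 2 * a^2 * (b / a - 1) = (a - b)^2 + a^2 - b^2"
    using a by (simp add: field_simps power2_eq_square)
  ultimately have "(a - b)^2 + a^2 - b^2 \<le> p * ln (p / q)" using eq by linarith
  then show ?thesis using a b unfolding a_def b_def by simp
qed

lemma hellinger:
  fixes p q :: "'a::finite \<Rightarrow> real"
  assumes p: "\<And>z. 0 \<le> p z" and q: "\<And>z. 0 < q z" and ps: "(\<Sum>z\<in>UNIV. p z) = 1" and qs: "(\<Sum>z\<in>UNIV. q z) = 1"
  shows "(sqrt (p z0) - sqrt (q z0))^2 \<le> (\<Sum>z\<in>UNIV. p z * log 2 (p z / q z))"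
proof -
  have "(\<Sum>z\<in>UNIV. (sqrt (p z) - sqrt (q z))^2 + p z - q z) \<le> (\<Sum>z\<in>UNIV. p z * ln (p z / q z))"
    by (intro sum_mono hell_term p q)
  then have 1: "(\<Sum>z\<in>UNIV. (sqrt (p z) - sqrt (q z))^2) \<le> (\<Sum>z\<in>UNIV. p z * ln (p z / q z))"
    using ps qs by (simp add: sum.distrib sum_subtractf)
  have 2: "(sqrt (p z0) - sqrt (q z0))^2 \<le> (\<Sum>z\<in>UNIV. (sqrt (p z) - sqrt (q z))^2)"
    by (rule member_le_sum) auto
  have l2: "0 < ln (2::real)" "ln (2::real) \<le> 1" using ln_le_minus_one[of 2] by auto
  have "(\<Sum>z\<in>UNIV. p z * log 2 (p z / q z)) = (\<Sum>z\<in>UNIV. p z * ln (p z / q z)) / ln 2"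
    by (simp add: log_def sum_divide_distrib)
  moreover have "(\<Sum>z\<in>UNIV. p z * ln (p z / q z)) \<le> (\<Sum>z\<in>UNIV. p z * ln (p z / q z)) / ln 2"
  proof -
    have "0 \<le> (\<Sum>z\<in>UNIV. p z * ln (p z / q z))" using 1 by (smt (verit) sum_nonneg zero_le_power2)
    then show ?thesis using l2 by (simp add: le_divide_eq mult_left_le)
  qed
  ultimately show ?thesis using 1 2 by linarith
qed

lemma hellinger_abs:
  fixes p q :: "'a::finite \<Rightarrow> real"
  assumes p: "\<And>z. 0 \<le> p z" and q: "\<And>z. 0 < q z" and ps: "(\<Sum>z\<in>UNIV. p z) = 1" and qs: "(\<Sum>z\<in>UNIV. q z) = 1"
  shows "\<bar>p z0 - q z0\<bar> \<le> 2 * sqrt (\<Sum>z\<in>UNIV. p z * log 2 (p z / q z))"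
proof -
  define D where "D = (\<Sum>z\<in>UNIV. p z * log 2 (p z / q z))"
  have h: "(sqrt (p z0) - sqrt (q z0))^2 \<le> D" unfolding D_def by (rule hellinger[OF assms])
  have "\<bar>sqrt (p z0) - sqrt (q z0)\<bar> = sqrt ((sqrt (p z0) - sqrt (q z0))^2)" by simp
  also have "\<dots> \<le> sqrt D" using h by (rule real_sqrt_le_mono)
  finally have s1: "\<bar>sqrt (p z0) - sqrt (q z0)\<bar> \<le> sqrt D" .
  have "p z0 \<le> 1" "q z0 \<le> 1"
    using ps qs member_le_sum[of z0 UNIV p] member_le_sum[of z0 UNIV q] p q less_imp_le by auto
  then have s2: "\<bar>sqrt (p z0) + sqrt (q z0)\<bar> \<le> 2" using p[of z0] q[of z0]
    by (simp add: abs_of_nonneg) (smt (verit) real_sqrt_le_1_iff)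
  have eq: "p z0 - q z0 = (sqrt (p z0) - sqrt (q z0)) * (sqrt (p z0) + sqrt (q z0))"
    using p[of z0] q[of z0] by (simp add: algebra_simps)
  have D0: "0 \<le> D" using h zero_le_power2[of "sqrt (p z0) - sqrt (q z0)"] by linarith
  have "\<bar>p z0 - q z0\<bar> \<le> sqrt D * 2"
    unfolding eq abs_mult by (rule mult_mono[OF s1 s2]) (use D0 in auto)
  then show ?thesis unfolding D_def by simp
qed


context chan begin

definition Qb :: "('x \<Rightarrow> real) \<Rightarrow> 'y \<Rightarrow> real" where
  "Qb p y = (\<Sum>x\<in>UNIV. p x * Wt x y)"
definition Imi :: "('x \<Rightarrow> real) \<Rightarrow> real" where
  "Imi p = (\<Sum>x\<in>UNIV. \<Sum>y\<in>UNIV. (p x * Wt x y) * log 2 ((p x * Wt x y) / (p x * Qb p y)))"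
definition Ient :: "('x \<Rightarrow> real) \<Rightarrow> real" where
  "Ient p = (\<Sum>x\<in>UNIV. p x * (\<Sum>y\<in>UNIV. Wt x y * log 2 (Wt x y))) - (\<Sum>y\<in>UNIV. Qb p y * log 2 (Qb p y))"

lemma Qb_ge: "(\<And>x. 0 \<le> p x) \<Longrightarrow> p x * Wt x y \<le> Qb p y"
  unfolding Qb_def by (rule member_le_sum) (auto intro: mult_nonneg_nonneg Wt_nn)

lemma Qb_nn: "(\<And>x. 0 \<le> p x) \<Longrightarrow> 0 \<le> Qb p y"
  unfolding Qb_def by (intro sum_nonneg mult_nonneg_nonneg Wt_nn) auto

lemma Qb_sum: "(\<Sum>x\<in>UNIV. p x) = 1 \<Longrightarrow> (\<Sum>y\<in>UNIV. Qb p y) = 1"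
  unfolding Qb_def by (subst sum.swap) (simp add: sum_distrib_left[symmetric] Wt_sum)

lemma Imi_Ient:
  assumes p: "\<And>x. 0 \<le> p x"
  shows "Imi p = Ient p"
proof -
  have trm: "(p x * Wt x y) * log 2 ((p x * Wt x y) / (p x * Qb p y))
      = p x * (Wt x y * log 2 (Wt x y)) - p x * Wt x y * log 2 (Qb p y)" for x y
  proof (cases "p x = 0 \<or> Wt x y = 0")
    case True then show ?thesis by auto
  next
    case False
    then have px: "p x > 0" and w: "Wt x y > 0" using p[of x] Wt_nn[of x y] by auto
    have "Qb p y > 0" using Qb_ge[where p=p and x=x and y=y, OF p] mult_pos_pos[OF px w] by linarith
    then show ?thesis using px w by (simp add: log_divide algebra_simps)
  qed
  have "Imi p = (\<Sum>x\<in>UNIV. p x * (\<Sum>y\<in>UNIV. Wt x y * log 2 (Wt x y))) - (\<Sum>x\<in>UNIV. \<Sum>y\<in>UNIV. p x * Wt x y * log 2 (Qb p y))"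
    unfolding Imi_def trm by (simp add: sum_subtractf sum_distrib_left)
  also have "(\<Sum>x\<in>UNIV. \<Sum>y\<in>UNIV. p x * Wt x y * log 2 (Qb p y)) = (\<Sum>y\<in>UNIV. Qb p y * log 2 (Qb p y))"
    unfolding Qb_def by (subst sum.swap) (simp add: sum_distrib_right)
  finally show ?thesis unfolding Ient_def .
qed

lemma Imi_nonneg:
  assumes p: "\<And>x. 0 \<le> p x" and ps: "(\<Sum>x\<in>UNIV. p x) = 1"
  shows "0 \<le> Imi p"
proof -
  let ?a = "\<lambda>q. p (fst q) * Wt (fst q) (snd q)"
  let ?b = "\<lambda>q. p (fst q) * Qb p (snd q)"
  have A: "(\<Sum>q\<in>UNIV. ?a q) = 1"
    unfolding UNIV_Times_UNIV[symmetric] sum.cartesian_product'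
    by (simp add: sum_distrib_left[symmetric] Wt_sum ps)
  have B: "(\<Sum>q\<in>UNIV. ?b q) = 1"
    unfolding UNIV_Times_UNIV[symmetric] sum.cartesian_product'
    by (simp add: sum_distrib_left[symmetric] Qb_sum[OF ps] ps)
  have "(\<Sum>q\<in>UNIV. ?a q) * log 2 ((\<Sum>q\<in>UNIV. ?a q) / (\<Sum>q\<in>UNIV. ?b q)) \<le> (\<Sum>q\<in>UNIV. ?a q * log 2 (?a q / ?b q))"
  proof (rule logsum)
    fix q :: "'x \<times> 'y"
    show "0 \<le> ?a q" using p Wt_nn by (simp add: mult_nonneg_nonneg)
    show "0 \<le> ?b q" using p Qb_nn[OF p] by (simp add: mult_nonneg_nonneg)
    assume "?b q = 0"
    then have "p (fst q) = 0 \<or> Qb p (snd q) = 0" by simp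
    then show "?a q = 0"
    proof
      assume "Qb p (snd q) = 0"
      moreover have "0 \<le> ?a q" using p Wt_nn by (simp add: mult_nonneg_nonneg)
      ultimately show ?thesis using Qb_ge[where p=p and x="fst q" and y="snd q", OF p] by linarith
    qed simp
  qed simp
  also have "\<dots> = Imi p"
    unfolding Imi_def UNIV_Times_UNIV[symmetric] sum.cartesian_product' by simp
  finally show ?thesis using A B by simp
qed

lemma DR_bound:
  assumes p: "\<And>x. 0 \<le> p x" and ps: "(\<Sum>x\<in>UNIV. p x) = 1"
    and c: "0 < c" "c \<le> 1" and Rpos: "\<And>y. 0 < R y" and Rge: "\<And>y. c * Qb p y \<le> R y"
  shows "(\<Sum>x\<in>UNIV. p x * DR R x) \<le> Imi p + log 2 (1 / c)"
proof -
  have trm: "p x * (Wt x y * log 2 (Wt x y / R y))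
     \<le> (p x * Wt x y) * log 2 ((p x * Wt x y) / (p x * Qb p y)) + p x * Wt x y * log 2 (1 / c)" for x y
  proof (cases "p x = 0 \<or> Wt x y = 0")
    case True then show ?thesis by auto
  next
    case False
    then have px: "p x > 0" and w: "Wt x y > 0" using p[of x] Wt_nn[of x y] by auto
    have qb: "Qb p y > 0" using Qb_ge[where p=p and x=x and y=y, OF p] mult_pos_pos[OF px w] by linarith
    have cq: "0 < c * Qb p y" using c qb by simp
    have le: "Wt x y / R y \<le> Wt x y / (c * Qb p y)"
      by (rule divide_left_mono[OF Rge[of y]]) (use w cq Rpos[of y] in auto)
    have "log 2 (Wt x y / R y) \<le> log 2 (Wt x y / (c * Qb p y))"
      using le w cq Rpos[of y] by (subst log_le_cancel_iff) auto
    also have "\<dots> = log 2 ((p x * Wt x y) / (p x * Qb p y)) + log 2 (1 / c)"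
      using w qb c px by (simp add: log_divide log_mult)
    finally have "log 2 (Wt x y / R y) \<le> log 2 ((p x * Wt x y) / (p x * Qb p y)) + log 2 (1 / c)" .
    then have "(p x * Wt x y) * log 2 (Wt x y / R y) \<le> (p x * Wt x y) * (log 2 ((p x * Wt x y) / (p x * Qb p y)) + log 2 (1 / c))"
      using px w by (intro mult_left_mono) auto
    then show ?thesis by (simp add: algebra_simps)
  qed
  have "(\<Sum>x\<in>UNIV. p x * DR R x) = (\<Sum>x\<in>UNIV. \<Sum>y\<in>UNIV. p x * (Wt x y * log 2 (Wt x y / R y)))"
    unfolding DR_def by (simp add: sum_distrib_left)
  also have "\<dots> \<le> (\<Sum>x\<in>UNIV. \<Sum>y\<in>UNIV. (p x * Wt x y) * log 2 ((p x * Wt x y) / (p x * Qb p y)) + p x * Wt x y * log 2 (1 / c))"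
    by (intro sum_mono trm)
  also have "\<dots> = Imi p + (\<Sum>x\<in>UNIV. p x * (\<Sum>y\<in>UNIV. Wt x y)) * log 2 (1 / c)"
    unfolding Imi_def by (simp add: sum.distrib sum_distrib_left sum_distrib_right mult.assoc)
  also have "\<dots> = Imi p + log 2 (1 / c)" by (simp add: Wt_sum ps)
  finally show ?thesis .
qed

end


lemma prod_ind_seq:
  fixes q :: "'a::finite \<Rightarrow> real"
  assumes "k < n" "(\<Sum>a\<in>UNIV. q a) = 1"
  shows "(\<Sum>zs\<in>seqs n. (\<Prod>i<n. q (zs!i)) * (if zs!k = z then 1 else 0)) = q z"
proof -
  define g where "g = (\<lambda>i a. if i = k then (if a = z then q a else 0) else q a)"
  have "(\<Prod>i<n. q (zs!i)) * (if zs!k = z then 1 else 0) = (\<Prod>i<n. g i (zs!i))" for zs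
  proof (cases "zs!k = z")
    case True then show ?thesis unfolding g_def by (auto intro!: prod.cong)
  next
    case False
    then have "g k (zs!k) = 0" unfolding g_def by simp
    then have "(\<Prod>i<n. g i (zs!i)) = 0" using assms(1) by (intro prod_zero) auto
    then show ?thesis using False by simp
  qed
  then have "(\<Sum>zs\<in>seqs n. (\<Prod>i<n. q (zs!i)) * (if zs!k = z then 1 else 0)) = (\<Prod>i<n. \<Sum>a\<in>UNIV. g i a)"
    by (simp add: sum_seqs_prod)
  also have "\<dots> = (\<Prod>i<n. if i = k then q z else 1)"
    by (intro prod.cong refl) (auto simp: g_def assms(2))
  also have "\<dots> = q z" using assms(1) by (subst prod.delta) auto
  finally show ?thesis .
qed

lemma kl_marg:
  fixes P :: "'a::finite list \<Rightarrow> real" and q :: "'a \<Rightarrow> real"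
  assumes P: "\<And>zs. 0 \<le> P zs" and q: "\<And>a. 0 < q a" and qs: "(\<Sum>a\<in>UNIV. q a) = 1" and k: "k < n"
  shows "(\<Sum>z\<in>UNIV. (\<Sum>zs\<in>seqs n. P zs * (if zs!k = z then 1 else 0)) *
            log 2 ((\<Sum>zs\<in>seqs n. P zs * (if zs!k = z then 1 else 0)) / q z))
       \<le> kl_div (seqs n) P (\<lambda>zs. \<Prod>i<n. q (zs!i))"
proof -
  define qn where "qn = (\<lambda>zs. \<Prod>i<n. q (zs!i))"
  have qn: "0 < qn zs" for zs unfolding qn_def by (intro prod_pos) (simp add: q)
  define S where "S = (\<lambda>z::'a. {zs\<in>seqs n. zs!k = z})"
  have fin: "finite (S z)" for z unfolding S_def by (rule finite_subset[where B="seqs n"]) auto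
  have fib: "(\<Sum>zs\<in>S z. f zs) = (\<Sum>zs\<in>seqs n. f zs * (if zs!k = z then 1 else 0))" for f :: "'a list \<Rightarrow> real" and z
  proof -
    have "(\<Sum>zs\<in>S z. f zs) = (\<Sum>zs\<in>seqs n. if zs!k = z then f zs else 0)"
      unfolding S_def by (rule sum.inter_filter) simp
    also have "\<dots> = (\<Sum>zs\<in>seqs n. f zs * (if zs!k = z then 1 else 0))"
      by (intro sum.cong) auto
    finally show ?thesis .
  qed
  have ind1: "(\<Sum>z\<in>UNIV. c * (if a = z then 1 else 0)) = (c::real)" for c and a :: 'a
  proof -
    have "(\<Sum>z\<in>UNIV. c * (if a = z then 1 else 0)) = (\<Sum>z\<in>UNIV. if a = z then c else 0)"
      by (intro sum.cong) auto
    then show ?thesis by (simp add: sum.delta')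
  qed
  have kl: "kl_div (seqs n) P qn = (\<Sum>zs\<in>seqs n. P zs * log 2 (P zs / qn zs))"
    unfolding kl_div_def by (intro sum.cong) auto
  also have "\<dots> = (\<Sum>zs\<in>seqs n. \<Sum>z\<in>UNIV. P zs * log 2 (P zs / qn zs) * (if zs!k = z then 1 else 0))"
    by (intro sum.cong refl) (simp add: ind1)
  also have "\<dots> = (\<Sum>z\<in>UNIV. \<Sum>zs\<in>S z. P zs * log 2 (P zs / qn zs))"
    by (subst sum.swap) (simp add: fib)
  finally have kl: "kl_div (seqs n) P qn = (\<Sum>z\<in>UNIV. \<Sum>zs\<in>S z. P zs * log 2 (P zs / qn zs))" .
  have "(\<Sum>zs\<in>S z. P zs) * log 2 ((\<Sum>zs\<in>S z. P zs) / (\<Sum>zs\<in>S z. qn zs)) \<le> (\<Sum>zs\<in>S z. P zs * log 2 (P zs / qn zs))" for z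
    by (rule logsum[OF fin]) (use P qn less_imp_le[OF qn] in \<open>auto simp: less_imp_neq[OF qn, symmetric]\<close>)
  moreover have "(\<Sum>zs\<in>S z. qn zs) = q z" for z
    unfolding fib qn_def by (rule prod_ind_seq[OF k qs])
  ultimately have "(\<Sum>z\<in>UNIV. (\<Sum>zs\<in>S z. P zs) * log 2 ((\<Sum>zs\<in>S z. P zs) / q z)) \<le> kl_div (seqs n) P qn"
    unfolding kl by (intro sum_mono) auto
  then show ?thesis unfolding fib qn_def .
qed

context chan begin

lemma marg_Z:
  assumes k: "k < n"
  shows "S3 n (\<lambda>ss ys zs. F e n ss ys zs * (if zs!k = z then 1 else 0)) = (\<Sum>x\<in>UNIV. PX e k x * Wz x z)"
proof -
  define h where "h = (\<lambda>(ss::'s list) (ys::'y list) (zs::'z list). if zs!k = z then 1 else (0::real))"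
  have "S3 n (\<lambda>ss ys zs. F e n ss ys zs * (if zs!k = z then 1 else 0))
      = S3 n (\<lambda>ss ys zs. F e n ss ys zs * h (take (Suc k) ss) (take (Suc k) ys) (take (Suc k) zs))"
    by (intro S3_cong) (simp add: h_def)
  also have "\<dots> = S3 (Suc k) (\<lambda>ss ys zs. F e (Suc k) ss ys zs * h ss ys zs)"
    using k by (intro F_marg) simp
  also have "\<dots> = S3 k (\<lambda>ss ys zs. \<Sum>s\<in>UNIV. \<Sum>y\<in>UNIV. \<Sum>z'\<in>UNIV. F e k ss ys zs * (Q s * W (e k ss) s y z') * (if z' = z then 1 else 0))"
    unfolding S3_Suc by (intro S3_cong sum.cong refl) (simp add: F_snoc h_def nth_append)
  also have "\<dots> = S3 k (\<lambda>ss ys zs. F e k ss ys zs * Wz (e k ss) z)"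
  proof (intro S3_cong)
    fix ss ys zs
    have "(\<Sum>s\<in>UNIV. \<Sum>y\<in>UNIV. \<Sum>z'\<in>UNIV. F e k ss ys zs * (Q s * W (e k ss) s y z') * (if z' = z then 1 else 0))
       = (\<Sum>s\<in>UNIV. \<Sum>y\<in>UNIV. F e k ss ys zs * (Q s * W (e k ss) s y z))"
      by (intro sum.cong refl) (simp add: if_distrib sum.delta' cong: if_cong)
    also have "\<dots> = F e k ss ys zs * Wz (e k ss) z"
      unfolding Wz_def by (simp add: sum_distrib_left mult.assoc)
    finally show "(\<Sum>s\<in>UNIV. \<Sum>y\<in>UNIV. \<Sum>z'\<in>UNIV. F e k ss ys zs * (Q s * W (e k ss) s y z') * (if z' = z then 1 else 0))
       = F e k ss ys zs * Wz (e k ss) z" .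
  qed
  also have "\<dots> = (\<Sum>x\<in>UNIV. PX e k x * Wz x z)" by (rule S3_PX)
  finally show ?thesis .
qed

lemma warden_marg:
  assumes k: "k < n"
  shows "(\<Sum>zs\<in>seqs n. warden_dist W Q N n enc zs * (if zs!k = z then 1 else 0))
     = (\<Sum>m\<in>{1..N}. \<Sum>x\<in>UNIV. PX (\<lambda>i. enc i m) k x * Wz x z) / real N"
proof -
  have "(\<Sum>zs\<in>seqs n. warden_dist W Q N n enc zs * (if zs!k = z then 1 else 0))
      = (\<Sum>zs\<in>seqs n. \<Sum>m\<in>{1..N}. \<Sum>ss\<in>seqs n. \<Sum>ys\<in>seqs n. F (\<lambda>i. enc i m) n ss ys zs * (if zs!k = z then 1 else 0) / real N)"
    unfolding warden_dist_def code_joint_F by (simp add: sum_distrib_right)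
  also have "\<dots> = (\<Sum>m\<in>{1..N}. \<Sum>zs\<in>seqs n. \<Sum>ss\<in>seqs n. \<Sum>ys\<in>seqs n. F (\<lambda>i. enc i m) n ss ys zs * (if zs!k = z then 1 else 0) / real N)"
    by (rule sum.swap)
  also have "\<dots> = (\<Sum>m\<in>{1..N}. S3 n (\<lambda>ss ys zs. F (\<lambda>i. enc i m) n ss ys zs * (if zs!k = z then 1 else 0)) / real N)"
  proof (intro sum.cong refl)
    fix m
    have "(\<Sum>zs\<in>seqs n. \<Sum>ss\<in>seqs n. \<Sum>ys\<in>seqs n. F (\<lambda>i. enc i m) n ss ys zs * (if zs!k = z then 1 else 0) / real N)
       = (\<Sum>ss\<in>seqs n. \<Sum>zs\<in>seqs n. \<Sum>ys\<in>seqs n. F (\<lambda>i. enc i m) n ss ys zs * (if zs!k = z then 1 else 0) / real N)"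
      by (rule sum.swap)
    also have "\<dots> = (\<Sum>ss\<in>seqs n. \<Sum>ys\<in>seqs n. \<Sum>zs\<in>seqs n. F (\<lambda>i. enc i m) n ss ys zs * (if zs!k = z then 1 else 0) / real N)"
      by (intro sum.cong refl, rule sum.swap)
    finally show "(\<Sum>zs\<in>seqs n. \<Sum>ss\<in>seqs n. \<Sum>ys\<in>seqs n. F (\<lambda>i. enc i m) n ss ys zs * (if zs!k = z then 1 else 0) / real N)
       = S3 n (\<lambda>ss ys zs. F (\<lambda>i. enc i m) n ss ys zs * (if zs!k = z then 1 else 0)) / real N"
      unfolding S3_def by (simp add: sum_divide_distrib)
  qed
  also have "\<dots> = (\<Sum>m\<in>{1..N}. \<Sum>x\<in>UNIV. PX (\<lambda>i. enc i m) k x * Wz x z) / real N"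
    by (simp add: marg_Z[OF k] sum_divide_distrib)
  finally show ?thesis .
qed

lemma warden_nn: "0 \<le> warden_dist W Q N n enc zs"
  unfolding warden_dist_def code_joint_F by (intro sum_nonneg mult_nonneg_nonneg F_nn) auto

end


lemma sum_swap3: "(\<Sum>a\<in>A. \<Sum>b\<in>B. \<Sum>c\<in>C. f a b c) = (\<Sum>c\<in>C. \<Sum>b\<in>B. \<Sum>a\<in>A. f a b c)"
proof -
  have "(\<Sum>a\<in>A. \<Sum>b\<in>B. \<Sum>c\<in>C. f a b c) = (\<Sum>a\<in>A. \<Sum>c\<in>C. \<Sum>b\<in>B. f a b c)"
    by (intro sum.cong refl, rule sum.swap)
  also have "\<dots> = (\<Sum>c\<in>C. \<Sum>a\<in>A. \<Sum>b\<in>B. f a b c)" by (rule sum.swap)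
  also have "\<dots> = (\<Sum>c\<in>C. \<Sum>b\<in>B. \<Sum>a\<in>A. f a b c)" by (intro sum.cong refl, rule sum.swap)
  finally show ?thesis .
qed

lemma nlog_bound:
  assumes "n \<ge> (1::nat)"
  shows "real n * log 2 (1 / (real n / (real n + 1))) \<le> 2"
proof -
  have np: "real n > 0" using assms by simp
  have "1 / (real n / (real n + 1)) = 1 + 1 / real n" using np by (simp add: field_simps)
  moreover have "ln (1 + 1 / real n) \<le> 1 / real n" by (rule ln_add_one_self_le_self) simp
  ultimately have "log 2 (1 / (real n / (real n + 1))) \<le> (1 / real n) / ln 2"
    unfolding log_def by (metis divide_right_mono ln_2_less_1 ln_gt_zero_iff less_imp_le one_less_numeral_iff semiring_norm(76) zero_less_numeral ln_le_cancel_iff)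
  also have "\<dots> \<le> (1 / real n) * 2" using ln2_ge_half np by (simp add: field_simps)
  finally have "real n * log 2 (1 / (real n / (real n + 1))) \<le> real n * ((1 / real n) * 2)"
    using np by (intro mult_left_mono) auto
  then show ?thesis using np by simp
qed

context chan begin

lemma code_converse:
  fixes enc :: "nat \<Rightarrow> nat \<Rightarrow> 's list \<Rightarrow> 'x" and dec :: "'y list \<Rightarrow> nat"
  assumes n: "n \<ge> 1" and N: "N \<ge> 1"
  defines "pb \<equiv> (\<lambda>x. (\<Sum>k<n. \<Sum>m\<in>{1..N}. PX (\<lambda>i. enc i m) k x) / (real n * real N))"
  shows "(\<forall>x. 0 \<le> pb x)" "(\<Sum>x\<in>UNIV. pb x) = 1"
    "(1 - error_prob W Q N n enc dec) * log 2 N - 6 \<le> real n * Imi pb"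
    "\<And>z. (\<Sum>x\<in>UNIV. pb x * Wz x z) = (\<Sum>k<n. \<Sum>zs\<in>seqs n. warden_dist W Q N n enc zs * (if zs!k = z then 1 else 0)) / real n"
proof -
  have np: "real n > 0" and Np: "real N > 0" using n N by auto
  show pb_nn: "\<forall>x. 0 \<le> pb x" unfolding pb_def using np Np
    by (auto intro!: divide_nonneg_pos sum_nonneg PX_nn)
  have "(\<Sum>x\<in>UNIV. pb x) = (\<Sum>k<n. \<Sum>m\<in>{1..N}. \<Sum>x\<in>UNIV. PX (\<lambda>i. enc i m) k x) / (real n * real N)"
    unfolding pb_def sum_divide_distrib[symmetric] by (subst sum_swap3) (subst sum.swap, rule refl)
  also have "\<dots> = 1" using np Np by (simp add: PX_sum)
  finally show pb_sum: "(\<Sum>x\<in>UNIV. pb x) = 1" .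
  show "\<And>z. (\<Sum>x\<in>UNIV. pb x * Wz x z) = (\<Sum>k<n. \<Sum>zs\<in>seqs n. warden_dist W Q N n enc zs * (if zs!k = z then 1 else 0)) / real n"
  proof -
    fix z
    have "(\<Sum>k<n. \<Sum>zs\<in>seqs n. warden_dist W Q N n enc zs * (if zs!k = z then 1 else 0)) / real n
       = (\<Sum>k<n. (\<Sum>m\<in>{1..N}. \<Sum>x\<in>UNIV. PX (\<lambda>i. enc i m) k x * Wz x z) / real N) / real n"
      by (simp add: warden_marg)
    also have "\<dots> = (\<Sum>x\<in>UNIV. (\<Sum>k<n. \<Sum>m\<in>{1..N}. PX (\<lambda>i. enc i m) k x) * Wz x z) / (real n * real N)"
    proof -
      have sw: "(\<Sum>k<n. \<Sum>m\<in>{1..N}. \<Sum>x\<in>UNIV. PX (\<lambda>i. enc i m) k x * Wz x z)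
          = (\<Sum>x\<in>UNIV. \<Sum>k<n. \<Sum>m\<in>{1..N}. PX (\<lambda>i. enc i m) k x * Wz x z)"
        by (subst sum_swap3) (rule sum.cong[OF refl], rule sum.swap)
      have A: "(\<Sum>k<n. (\<Sum>m\<in>{1..N}. \<Sum>x\<in>UNIV. PX (\<lambda>i. enc i m) k x * Wz x z) / real N) / real n
          = (\<Sum>k<n. \<Sum>m\<in>{1..N}. \<Sum>x\<in>UNIV. PX (\<lambda>i. enc i m) k x * Wz x z) / (real n * real N)"
        by (simp add: sum_divide_distrib[symmetric] divide_divide_eq_left mult.commute)
      have B: "(\<Sum>x\<in>UNIV. (\<Sum>k<n. \<Sum>m\<in>{1..N}. PX (\<lambda>i. enc i m) k x) * Wz x z)
          = (\<Sum>x\<in>UNIV. \<Sum>k<n. \<Sum>m\<in>{1..N}. PX (\<lambda>i. enc i m) k x * Wz x z)"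
        by (simp add: sum_distrib_right)
      show ?thesis unfolding A B sw ..
    qed
    also have "\<dots> = (\<Sum>x\<in>UNIV. pb x * Wz x z)"
      unfolding pb_def sum_divide_distrib[where A=UNIV] by (intro sum.cong refl) (simp only: times_divide_eq_left)
    finally show "(\<Sum>x\<in>UNIV. pb x * Wz x z) = (\<Sum>k<n. \<Sum>zs\<in>seqs n. warden_dist W Q N n enc zs * (if zs!k = z then 1 else 0)) / real n"
      by simp
  qed
  define c where "c = real n / (real n + 1)"
  define R where "R = (\<lambda>y. c * Qb pb y + (1 - c) / real CARD('y))"
  have c: "0 < c" "c \<le> 1" "c < 1" using np unfolding c_def by auto
  have Rpos: "0 < R y" for y
    unfolding R_def using c Qb_nn[of pb y] pb_nn
    by (intro add_nonneg_pos mult_nonneg_nonneg) auto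
  have Rsum: "(\<Sum>y\<in>UNIV. R y) = 1"
    unfolding R_def by (simp add: sum.distrib sum_distrib_left[symmetric] Qb_sum[OF pb_sum])
  have Rge: "c * Qb pb y \<le> R y" for y unfolding R_def using c by simp
  let ?T = "\<lambda>m. (\<Sum>ys\<in>seqs n. PY (\<lambda>i. enc i m) n ys * log 2 (PY (\<lambda>i. enc i m) n ys / prodR R n ys))"
  have "(1 - error_prob W Q N n enc dec) * log 2 N - 4 \<le> (\<Sum>m\<in>{1..N}. (1 / real N) * ?T m)"
    by (rule fano[OF N Rpos Rsum])
  also have "\<dots> \<le> (\<Sum>m\<in>{1..N}. (1 / real N) * (\<Sum>k<n. \<Sum>x\<in>UNIV. PX (\<lambda>i. enc i m) k x * DR R x))"
    using Np by (intro sum_mono mult_left_mono chain Rpos) auto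
  also have "\<dots> = real n * (\<Sum>x\<in>UNIV. pb x * DR R x)"
  proof -
    have "(\<Sum>m\<in>{1..N}. (1 / real N) * (\<Sum>k<n. \<Sum>x\<in>UNIV. PX (\<lambda>i. enc i m) k x * DR R x))
       = (\<Sum>x\<in>UNIV. (\<Sum>k<n. \<Sum>m\<in>{1..N}. PX (\<lambda>i. enc i m) k x) * DR R x) / real N"
    proof -
      have A: "(\<Sum>m\<in>{1..N}. (1 / real N) * (\<Sum>k<n. \<Sum>x\<in>UNIV. PX (\<lambda>i. enc i m) k x * DR R x))
          = (\<Sum>m\<in>{1..N}. \<Sum>k<n. \<Sum>x\<in>UNIV. PX (\<lambda>i. enc i m) k x * DR R x) / real N"
        by (simp add: sum_divide_distrib[symmetric])
      have B: "(\<Sum>x\<in>UNIV. (\<Sum>k<n. \<Sum>m\<in>{1..N}. PX (\<lambda>i. enc i m) k x) * DR R x)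
          = (\<Sum>x\<in>UNIV. \<Sum>k<n. \<Sum>m\<in>{1..N}. PX (\<lambda>i. enc i m) k x * DR R x)"
        by (simp add: sum_distrib_right)
      show ?thesis unfolding A B sum_swap3[of _ "{1..N}"] ..
    qed
    also have "\<dots> = real n * (\<Sum>x\<in>UNIV. pb x * DR R x)"
      unfolding pb_def sum_divide_distrib[where A=UNIV] sum_distrib_left[where A=UNIV]
      using np Np by (intro sum.cong refl) (simp add: field_simps)
    finally show ?thesis .
  qed
  also have "\<dots> \<le> real n * (Imi pb + log 2 (1 / c))"
    using np by (intro mult_left_mono DR_bound pb_sum c Rpos Rge) (auto simp: pb_nn)
  also have "\<dots> = real n * Imi pb + real n * log 2 (1 / c)" by (simp add: algebra_simps)
  also have "\<dots> \<le> real n * Imi pb + 2" using nlog_bound[OF n] unfolding c_def by simp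
  finally show "(1 - error_prob W Q N n enc dec) * log 2 N - 6 \<le> real n * Imi pb" by simp
qed

end


context chan begin

lemma Q0_eq: "Q0 W Q x0 z = Wz x0 z"
  unfolding Q0_def Wz_def ..

definition pmix :: "(nat \<Rightarrow> real) \<Rightarrow> (nat \<Rightarrow> 'x \<Rightarrow> real) \<Rightarrow> 'x \<Rightarrow> real" where
  "pmix PV PXV x = (\<Sum>v\<in>aux_alph TYPE('x). PV v * PXV v x)"

lemma P_XY_eq: "P_XY W Q PV PXV x y = pmix PV PXV x * Wt x y"
proof -
  have "P_XY W Q PV PXV x y = (\<Sum>s\<in>UNIV. \<Sum>v\<in>aux_alph TYPE('x). \<Sum>z\<in>UNIV. PV v * PXV v x * (Q s * W x s y z))"
    unfolding P_XY_def joint_SVXYZ_def by (simp add: algebra_simps)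
  also have "\<dots> = (\<Sum>v\<in>aux_alph TYPE('x). \<Sum>s\<in>UNIV. \<Sum>z\<in>UNIV. PV v * PXV v x * (Q s * W x s y z))"
    by (rule sum.swap)
  also have "\<dots> = pmix PV PXV x * Wt x y"
    unfolding pmix_def Wt_def sum_distrib_right by (intro sum.cong refl) (simp add: sum_distrib_left mult.assoc)
  finally show ?thesis .
qed

lemma P_VZ_eq: "P_VZ W Q PV PXV v z = PV v * (\<Sum>x\<in>UNIV. PXV v x * Wz x z)"
proof -
  have "P_VZ W Q PV PXV v z = (\<Sum>x\<in>UNIV. \<Sum>s\<in>UNIV. \<Sum>y\<in>UNIV. PV v * (PXV v x * (Q s * W x s y z)))"
    unfolding P_VZ_def joint_SVXYZ_def by (subst sum.swap) (simp add: algebra_simps)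
  also have "\<dots> = PV v * (\<Sum>x\<in>UNIV. PXV v x * Wz x z)"
    unfolding Wz_def by (simp add: sum_distrib_left)
  finally show ?thesis .
qed

lemma P_Z_eq: "P_Z W Q PV PXV z = (\<Sum>x\<in>UNIV. pmix PV PXV x * Wz x z)"
  unfolding P_Z_def P_VZ_eq pmix_def
  by (simp add: sum_distrib_left sum_distrib_right algebra_simps) (rule sum.swap)

lemma MI_eq: "mutual_info UNIV UNIV (P_XY W Q PV PXV) = Imi (pmix PV PXV)"
proof -
  let ?p = "pmix PV PXV"
  have m1: "(\<Sum>y\<in>UNIV. P_XY W Q PV PXV x y) = ?p x" for x
    by (simp add: P_XY_eq sum_distrib_left[symmetric] Wt_sum)
  have m2: "(\<Sum>x\<in>UNIV. P_XY W Q PV PXV x y) = Qb ?p y" for y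
    by (simp add: P_XY_eq Qb_def)
  show ?thesis unfolding mutual_info_def m1 m2 Imi_def
    by (intro sum.cong refl) (simp add: P_XY_eq)
qed

lemma aux_ne: "0 \<in> aux_alph TYPE('x)"
  unfolding aux_alph_def by simp

definition Kset :: "'x \<Rightarrow> ('x \<Rightarrow> real) set" where
  "Kset x0 = {p. (\<forall>x. 0 \<le> p x) \<and> (\<Sum>x\<in>UNIV. p x) = 1 \<and> (\<forall>z. (\<Sum>x\<in>UNIV. p x * Wz x z) = Wz x0 z)}"

lemma rate_set_eq: "rate_set_SCT W Q x0 = {R. 0 \<le> R \<and> (\<exists>p\<in>Kset x0. R \<le> Imi p)}"
proof (intro set_eqI iffI)
  fix R assume "R \<in> rate_set_SCT W Q x0"
  then obtain PV PXV where R: "0 \<le> R" and D: "in_D_SCT W Q x0 PV PXV"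
    and RI: "R \<le> mutual_info UNIV UNIV (P_XY W Q PV PXV)"
    unfolding rate_set_SCT_def by auto
  let ?p = "pmix PV PXV"
  have PV: "\<forall>v\<in>aux_alph TYPE('x). 0 \<le> PV v" "(\<Sum>v\<in>aux_alph TYPE('x). PV v) = 1"
    using D unfolding in_D_SCT_def is_pmf_on_def by auto
  have PXV: "\<forall>v\<in>aux_alph TYPE('x). (\<forall>x. 0 \<le> PXV v x) \<and> (\<Sum>x\<in>UNIV. PXV v x) = 1"
    using D unfolding in_D_SCT_def is_pmf_on_def by auto
  have "0 \<le> ?p x" for x unfolding pmix_def using PV PXV by (intro sum_nonneg mult_nonneg_nonneg) auto
  moreover have "(\<Sum>x\<in>UNIV. ?p x) = 1"
    unfolding pmix_def using PV PXV
    by (subst sum.swap) (simp add: sum_distrib_left[symmetric])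
  moreover have "(\<Sum>x\<in>UNIV. ?p x * Wz x z) = Wz x0 z" for z
    using D unfolding in_D_SCT_def by (simp add: P_Z_eq Q0_eq)
  ultimately have "?p \<in> Kset x0" unfolding Kset_def by auto
  then show "R \<in> {R. 0 \<le> R \<and> (\<exists>p\<in>Kset x0. R \<le> Imi p)}" using R RI by (auto simp: MI_eq)
next
  fix R assume "R \<in> {R. 0 \<le> R \<and> (\<exists>p\<in>Kset x0. R \<le> Imi p)}"
  then obtain p where R: "0 \<le> R" and p: "p \<in> Kset x0" and RI: "R \<le> Imi p" by auto
  have pnn: "\<forall>x. 0 \<le> p x" and ps: "(\<Sum>x\<in>UNIV. p x) = 1" and pz: "\<And>z. (\<Sum>x\<in>UNIV. p x * Wz x z) = Wz x0 z"
    using p unfolding Kset_def by auto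
  define PV where "PV = (\<lambda>v::nat. if v = 0 then 1 else (0::real))"
  define PXV where "PXV = (\<lambda>v::nat. p)"
  have fin: "finite (aux_alph TYPE('x))" unfolding aux_alph_def by simp
  have pm: "pmix PV PXV = p"
  proof
    fix x
    have "pmix PV PXV x = (\<Sum>v\<in>aux_alph TYPE('x). if v = 0 then p x else 0)"
      unfolding pmix_def PV_def PXV_def by (intro sum.cong) auto
    then show "pmix PV PXV x = p x" using aux_ne fin by simp
  qed
  have PVs: "(\<Sum>v\<in>aux_alph TYPE('x). PV v) = 1" unfolding PV_def using aux_ne fin by (simp add: sum.delta)
  have Q0s: "(\<Sum>z\<in>UNIV. Wz x0 z) = 1" by (rule Wz_sum)
  have MIVZ: "mutual_info (aux_alph TYPE('x)) UNIV (P_VZ W Q PV PXV) = 0"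
  proof -
    have PVZ: "P_VZ W Q PV PXV v z = PV v * Wz x0 z" for v z unfolding P_VZ_eq PXV_def pz ..
    have m1: "(\<Sum>z\<in>UNIV. P_VZ W Q PV PXV v z) = PV v" for v
      unfolding PVZ by (simp add: sum_distrib_left[symmetric] Q0s)
    have m2: "(\<Sum>v\<in>aux_alph TYPE('x). P_VZ W Q PV PXV v z) = Wz x0 z" for z
      unfolding PVZ by (simp add: sum_distrib_right[symmetric] PVs)
    show ?thesis unfolding mutual_info_def m1 m2
      by (intro sum.neutral ballI) (auto simp: PVZ)
  qed
  have "in_D_SCT W Q x0 PV PXV"
    unfolding in_D_SCT_def is_pmf_on_def
  proof (intro conjI ballI allI)
    show "0 \<le> PV v" for v unfolding PV_def by simp
    show "(\<Sum>v\<in>aux_alph TYPE('x). PV v) = 1" by (rule PVs)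
    show "0 \<le> PXV v x" for v x unfolding PXV_def using pnn by simp
    show "(\<Sum>x\<in>UNIV. PXV v x) = 1" for v unfolding PXV_def using ps by simp
    show "P_Z W Q PV PXV z = Q0 W Q x0 z" for z unfolding P_Z_eq pm Q0_eq pz ..
    show "mutual_info (aux_alph TYPE('x)) UNIV (P_VZ W Q PV PXV) \<le> mutual_info UNIV UNIV (P_XY W Q PV PXV)"
      unfolding MIVZ MI_eq pm using Imi_nonneg pnn ps by auto
  qed
  then show "R \<in> rate_set_SCT W Q x0" unfolding rate_set_SCT_def using R RI MI_eq pm by auto
qed

end


context chan begin

definition Svec :: "(real ^ 'x) set" where
  "Svec = {v. (\<forall>x. 0 \<le> v$x) \<and> (\<Sum>x\<in>UNIV. v$x) = 1}"
definition Kvec :: "'x \<Rightarrow> (real ^ 'x) set" where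
  "Kvec x0 = {v. (\<forall>x. 0 \<le> v$x) \<and> (\<Sum>x\<in>UNIV. v$x) = 1 \<and> (\<forall>z. (\<Sum>x\<in>UNIV. v$x * Wz x z) = Wz x0 z)}"

lemma Svec_bounded: "bounded Svec"
proof (rule boundedI)
  fix v assume "v \<in> Svec"
  then have "norm v \<le> (\<Sum>x\<in>UNIV. \<bar>v$x\<bar>)" "(\<Sum>x\<in>UNIV. \<bar>v$x\<bar>) = 1"
    using norm_le_l1_cart[of v] unfolding Svec_def by auto
  then show "norm v \<le> 1" by simp
qed

lemma compact_Svec: "compact Svec"
proof -
  have "closed Svec" unfolding Svec_def
    by (intro closed_Collect_conj closed_Collect_all closed_Collect_le closed_Collect_eq continuous_intros)
  then show ?thesis using Svec_bounded compact_eq_bounded_closed by blast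
qed

lemma compact_Kvec: "compact (Kvec x0)"
proof -
  have "closed (Kvec x0)" unfolding Kvec_def
    by (intro closed_Collect_conj closed_Collect_all closed_Collect_le closed_Collect_eq continuous_intros)
  moreover have "Kvec x0 \<subseteq> Svec" unfolding Kvec_def Svec_def by auto
  ultimately show ?thesis using Svec_bounded compact_eq_bounded_closed bounded_subset by blast
qed

lemma Ient_cont: "continuous_on Svec (\<lambda>v. Ient (\<lambda>x. v$x))"
proof -
  have q: "continuous_on Svec (\<lambda>v. Qb (\<lambda>x. v$x) y)" for y unfolding Qb_def by (intro continuous_intros)
  have img: "(\<lambda>v. Qb (\<lambda>x. v$x) y) ` Svec \<subseteq> {0..}" for y
    unfolding Svec_def using Qb_nn by auto
  have e: "continuous_on Svec (\<lambda>v. Qb (\<lambda>x. v$x) y * log 2 (Qb (\<lambda>x. v$x) y))" for y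
    by (rule continuous_on_compose2[OF eta_cont q img])
  show ?thesis unfolding Ient_def by (intro continuous_intros e)
qed

lemma vec_in_Kset: "v \<in> Kvec x0 \<Longrightarrow> (\<lambda>x. v$x) \<in> Kset x0"
  unfolding Kvec_def Kset_def by auto

lemma Kset_in_vec: "p \<in> Kset x0 \<Longrightarrow> (\<chi> x. p x) \<in> Kvec x0"
  unfolding Kvec_def Kset_def by auto

lemma Kset_max: "\<exists>p\<in>Kset x0. \<forall>q\<in>Kset x0. Imi q \<le> Imi p"
proof -
  define d where "d = (\<chi> x. if x = x0 then 1 else (0::real))"
  have "(\<Sum>x\<in>UNIV. (if x = x0 then 1 else 0) * Wz x z) = Wz x0 z" for z
  proof -
    have "(\<Sum>x\<in>UNIV. (if x = x0 then 1 else 0) * Wz x z) = (\<Sum>x\<in>UNIV. if x = x0 then Wz x z else 0)"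
      by (intro sum.cong) auto
    then show ?thesis by simp
  qed
  then have "d \<in> Kvec x0" unfolding Kvec_def d_def by auto
  then have ne: "Kvec x0 \<noteq> {}" by auto
  have sub: "Kvec x0 \<subseteq> Svec" unfolding Kvec_def Svec_def by auto
  obtain v where v: "v \<in> Kvec x0" and vmax: "\<forall>w\<in>Kvec x0. Ient (\<lambda>x. w$x) \<le> Ient (\<lambda>x. v$x)"
    using continuous_attains_sup[OF compact_Kvec ne continuous_on_subset[OF Ient_cont sub]] by blast
  show ?thesis
  proof (intro bexI ballI)
    show "(\<lambda>x. v$x) \<in> Kset x0" by (rule vec_in_Kset[OF v])
    fix q assume q: "q \<in> Kset x0"
    have qnn: "\<And>x. 0 \<le> q x" using q unfolding Kset_def by auto
    have vnn: "\<And>x. 0 \<le> v$x" using v unfolding Kvec_def by auto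
    have "Ient (\<lambda>x. (\<chi> x. q x)$x) \<le> Ient (\<lambda>x. v$x)" using vmax Kset_in_vec[OF q] by blast
    then show "Imi q \<le> Imi (\<lambda>x. v$x)" using Imi_Ient[OF qnn] Imi_Ient[of "\<lambda>x. v$x"] vnn by simp
  qed
qed

end


context chan begin

lemma num_msgs_ge1: "num_msgs R n \<ge> 1"
proof -
  have "0 < 2 powr (real n * R)" by simp
  then have "-1 < 2 powr (real n * R)" by linarith
  then have "0 < \<lceil>2 powr (real n * R)\<rceil>" by simp
  then have "1 \<le> \<lceil>2 powr (real n * R)\<rceil>" by linarith
  then show ?thesis unfolding num_msgs_def using nat_mono by fastforce
qed

lemma num_msgs_log: "real n * R \<le> log 2 (real (num_msgs R n))"
proof -
  have "2 powr (real n * R) \<le> real (num_msgs R n)"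
  proof -
    have "0 < 2 powr (real n * R)" by simp
    then have "-1 < 2 powr (real n * R)" by linarith
    then have c0: "0 \<le> \<lceil>2 powr (real n * R)\<rceil>" by simp
    have "2 powr (real n * R) \<le> real_of_int \<lceil>2 powr (real n * R)\<rceil>" by (rule le_of_int_ceiling)
    also have "\<dots> = real (nat \<lceil>2 powr (real n * R)\<rceil>)" using c0 by simp
    finally show ?thesis unfolding num_msgs_def .
  qed
  then have "log 2 (2 powr (real n * R)) \<le> log 2 (real (num_msgs R n))"
    using num_msgs_ge1[of R n] by (subst log_le_cancel_iff) auto
  then show ?thesis by simp
qed

lemma code_facts:
  fixes enc :: "nat \<Rightarrow> nat \<Rightarrow> 's list \<Rightarrow> 'x" and dec :: "'y list \<Rightarrow> nat"
  assumes n: "n \<ge> 1" and N: "N \<ge> 1" and q: "\<And>z. 0 < Wz x0 z"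
  defines "pb \<equiv> (\<lambda>x. (\<Sum>k<n. \<Sum>m\<in>{1..N}. PX (\<lambda>i. enc i m) k x) / (real n * real N))"
  shows "\<And>z. \<bar>(\<Sum>x\<in>UNIV. pb x * Wz x z) - Wz x0 z\<bar>
           \<le> 2 * sqrt (kl_div (seqs n) (warden_dist W Q N n enc) (Q0_prod W Q x0 n))"
proof -
  fix z
  define KL where "KL = kl_div (seqs n) (warden_dist W Q N n enc) (Q0_prod W Q x0 n)"
  define mg where "mg = (\<lambda>k z. \<Sum>zs\<in>seqs n. warden_dist W Q N n enc zs * (if zs!k = z then 1 else 0))"
  have Np: "real N > 0" and np: "real n > 0" using N n by auto
  have qs: "(\<Sum>z\<in>UNIV. Wz x0 z) = 1" by (rule Wz_sum)
  have bound: "\<bar>mg k z - Wz x0 z\<bar> \<le> 2 * sqrt KL" if k: "k < n" for k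
  proof -
    have mg_nn: "0 \<le> mg k z'" for z' unfolding mg_def by (intro sum_nonneg mult_nonneg_nonneg warden_nn) auto
    have mg_sum: "(\<Sum>z'\<in>UNIV. mg k z') = 1"
    proof -
      have "(\<Sum>z'\<in>UNIV. mg k z') = (\<Sum>z'\<in>UNIV. (\<Sum>m\<in>{1..N}. \<Sum>x\<in>UNIV. PX (\<lambda>i. enc i m) k x * Wz x z') / real N)"
        unfolding mg_def by (simp add: warden_marg[OF k])
      also have "\<dots> = (\<Sum>m\<in>{1..N}. \<Sum>x\<in>UNIV. PX (\<lambda>i. enc i m) k x * (\<Sum>z'\<in>UNIV. Wz x z')) / real N"
      proof -
        have "(\<Sum>z'\<in>UNIV. \<Sum>m\<in>{1..N}. \<Sum>x\<in>UNIV. PX (\<lambda>i. enc i m) k x * Wz x z')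
            = (\<Sum>x\<in>UNIV. \<Sum>m\<in>{1..N}. \<Sum>z'\<in>UNIV. PX (\<lambda>i. enc i m) k x * Wz x z')"
          by (rule sum_swap3)
        also have "\<dots> = (\<Sum>m\<in>{1..N}. \<Sum>x\<in>UNIV. \<Sum>z'\<in>UNIV. PX (\<lambda>i. enc i m) k x * Wz x z')"
          by (rule sum.swap)
        finally show ?thesis by (simp add: sum_divide_distrib[symmetric] sum_distrib_left)
      qed
      also have "\<dots> = 1" using Np by (simp add: Wz_sum PX_sum)
      finally show ?thesis .
    qed
    have "\<bar>mg k z - Wz x0 z\<bar> \<le> 2 * sqrt (\<Sum>z'\<in>UNIV. mg k z' * log 2 (mg k z' / Wz x0 z'))"
      by (rule hellinger_abs[OF mg_nn q mg_sum qs])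
    also have "(\<Sum>z'\<in>UNIV. mg k z' * log 2 (mg k z' / Wz x0 z')) \<le> KL"
    proof -
      have "Q0_prod W Q x0 n = (\<lambda>zs. \<Prod>i<n. Wz x0 (zs!i))" unfolding Q0_prod_def Q0_eq ..
      then show ?thesis unfolding mg_def KL_def
        by (simp only:) (rule kl_marg[OF warden_nn q qs k])
    qed
    then have "2 * sqrt (\<Sum>z'\<in>UNIV. mg k z' * log 2 (mg k z' / Wz x0 z')) \<le> 2 * sqrt KL" by simp
    finally show ?thesis .
  qed
  have cc: "(\<Sum>x\<in>UNIV. pb x * Wz x z) = (\<Sum>k<n. mg k z) / real n"
    unfolding pb_def mg_def by (rule code_converse(4)[OF n N])
  have "(\<Sum>x\<in>UNIV. pb x * Wz x z) - Wz x0 z = (\<Sum>k<n. mg k z - Wz x0 z) / real n"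
    unfolding cc using np by (simp add: sum_subtractf field_simps)
  also have "\<bar>\<dots>\<bar> \<le> (\<Sum>k<n. \<bar>mg k z - Wz x0 z\<bar>) / real n"
    using np by (simp add: sum_abs divide_right_mono)
  also have "\<dots> \<le> (\<Sum>k<n. 2 * sqrt KL) / real n"
    using np bound by (intro divide_right_mono sum_mono) auto
  also have "\<dots> = 2 * sqrt KL" using np by simp
  finally show "\<bar>(\<Sum>x\<in>UNIV. pb x * Wz x z) - Wz x0 z\<bar> \<le> 2 * sqrt (kl_div (seqs n) (warden_dist W Q N n enc) (Q0_prod W Q x0 n))"
    unfolding KL_def .
qed

end


context chan begin

lemma achievable_le:
  assumes q: "\<And>z. 0 < Wz x0 z" and ach: "covert_achievable_SCT W Q x0 R"
  shows "\<exists>v\<in>Kvec x0. R \<le> Ient (\<lambda>x. v$x)"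
proof -
  obtain enc :: "nat \<Rightarrow> nat \<Rightarrow> nat \<Rightarrow> 's list \<Rightarrow> 'x" and dec :: "nat \<Rightarrow> 'y list \<Rightarrow> nat"
    where R0: "0 \<le> R"
    and Pe: "(\<lambda>n. error_prob W Q (num_msgs R n) n (enc n) (dec n)) \<longlonglongrightarrow> 0"
    and KL: "(\<lambda>n. kl_div (seqs n) (warden_dist W Q (num_msgs R n) n (enc n)) (Q0_prod W Q x0 n)) \<longlonglongrightarrow> 0"
    using ach unfolding covert_achievable_SCT_def by blast
  define N where "N = (\<lambda>n. num_msgs R n)"
  define pe where "pe = (\<lambda>n. error_prob W Q (num_msgs R n) n (enc n) (dec n))"
  define kl where "kl = (\<lambda>n. kl_div (seqs n) (warden_dist W Q (num_msgs R n) n (enc n)) (Q0_prod W Q x0 n))"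
  define pb where "pb = (\<lambda>n x. (\<Sum>k<n. \<Sum>m\<in>{1..N n}. PX (\<lambda>i. enc n i m) k x) / (real n * real (N n)))"
  define u where "u = (\<lambda>m. \<chi> x. pb (Suc m) x)"
  have N1: "N n \<ge> 1" for n unfolding N_def by (rule num_msgs_ge1)
  have n1: "Suc m \<ge> 1" for m by simp
  have pbnn: "0 \<le> pb (Suc m) x" for m x using code_converse(1)[OF n1 N1] unfolding pb_def by blast
  have pbsum: "(\<Sum>x\<in>UNIV. pb (Suc m) x) = 1" for m using code_converse(2)[OF n1 N1] unfolding pb_def by blast
  have uS: "u m \<in> Svec" for m unfolding u_def Svec_def using pbnn pbsum by simp
  have uI: "Ient (\<lambda>x. u m $ x) = Imi (pb (Suc m))" for m
    unfolding u_def using Imi_Ient[of "pb (Suc m)"] pbnn by simp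
  obtain l r where lS: "l \<in> Svec" and r: "strict_mono r" and ul: "(u \<circ> r) \<longlonglongrightarrow> l"
    using seq_compactE[OF compact_imp_seq_compact[OF compact_Svec], of u] uS by blast
  have ul': "(\<lambda>m. u (r m)) \<longlonglongrightarrow> l" using ul by (simp add: o_def)
  have lb: "(1 - pe (Suc m)) * R - 6 / real (Suc m) \<le> Ient (\<lambda>x. u m $ x)" if pe1: "pe (Suc m) \<le> 1" for m
  proof -
    have c3: "(1 - pe (Suc m)) * log 2 (real (N (Suc m))) - 6 \<le> real (Suc m) * Imi (pb (Suc m))"
      using code_converse(3)[OF n1 N1, where enc="enc (Suc m)" and dec="dec (Suc m)"]
      unfolding pb_def pe_def N_def by simp
    have "(1 - pe (Suc m)) * (real (Suc m) * R) \<le> (1 - pe (Suc m)) * log 2 (real (N (Suc m)))"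
      using pe1 num_msgs_log[of "Suc m" R] unfolding N_def by (intro mult_left_mono) auto
    have "real (Suc m) * ((1 - pe (Suc m)) * R - 6 / real (Suc m)) \<le> real (Suc m) * Imi (pb (Suc m))"
    proof -
      have e: "real (Suc m) * ((1 - pe (Suc m)) * R - 6 / real (Suc m)) = (1 - pe (Suc m)) * (real (Suc m) * R) - 6"
        by (simp add: field_simps)
      show ?thesis unfolding e using c3 \<open>(1 - pe (Suc m)) * (real (Suc m) * R) \<le> _\<close> by linarith
    qed
    then have "(1 - pe (Suc m)) * R - 6 / real (Suc m) \<le> Imi (pb (Suc m))"
      by (rule mult_left_le_imp_le) simp
    then show ?thesis using uI by simp
  qed
  have zc: "\<bar>(\<Sum>x\<in>UNIV. u m $ x * Wz x z) - Wz x0 z\<bar> \<le> 2 * sqrt (kl (Suc m))" for m z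
    using code_facts[OF n1 N1 q, where enc="enc (Suc m)" and z=z] unfolding u_def pb_def kl_def N_def by simp
  have pe_r: "(\<lambda>m. pe (Suc (r m))) \<longlonglongrightarrow> 0"
  proof -
    have "(\<lambda>n. pe (Suc n)) \<longlonglongrightarrow> 0" using Pe unfolding pe_def by (rule LIMSEQ_Suc)
    from LIMSEQ_subseq_LIMSEQ[OF this r] show ?thesis by (simp add: o_def)
  qed
  have kl_r: "(\<lambda>m. 2 * sqrt (kl (Suc (r m)))) \<longlonglongrightarrow> 0"
  proof -
    have "(\<lambda>n. kl (Suc n)) \<longlonglongrightarrow> 0" using KL unfolding kl_def by (rule LIMSEQ_Suc)
    from LIMSEQ_subseq_LIMSEQ[OF this r] have "(\<lambda>m. kl (Suc (r m))) \<longlonglongrightarrow> 0" by (simp add: o_def)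
    from tendsto_mult[OF tendsto_const[of 2] tendsto_real_sqrt[OF this]] show ?thesis by simp
  qed
  have six: "(\<lambda>m. 6 / real (Suc (r m))) \<longlonglongrightarrow> 0"
  proof -
    have "(\<lambda>n. 6 / real (Suc n)) \<longlonglongrightarrow> 0" by real_asymp
    from LIMSEQ_subseq_LIMSEQ[OF this r] show ?thesis by (simp add: o_def)
  qed
  have lK: "l \<in> Kvec x0"
  proof -
    have "(\<Sum>x\<in>UNIV. l $ x * Wz x z) = Wz x0 z" for z
    proof -
      have t1: "(\<lambda>m. \<Sum>x\<in>UNIV. u (r m) $ x * Wz x z) \<longlonglongrightarrow> (\<Sum>x\<in>UNIV. l $ x * Wz x z)"
        by (intro tendsto_intros ul')
      have "(\<lambda>m. (\<Sum>x\<in>UNIV. u (r m) $ x * Wz x z) - Wz x0 z) \<longlonglongrightarrow> 0"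
        by (rule Lim_null_comparison[OF _ kl_r]) (simp add: zc)
      then have t2: "(\<lambda>m. \<Sum>x\<in>UNIV. u (r m) $ x * Wz x z) \<longlonglongrightarrow> Wz x0 z"
        by (simp add: LIM_zero_iff)
      show ?thesis using LIMSEQ_unique[OF t1 t2] .
    qed
    then show ?thesis using lS unfolding Svec_def Kvec_def by auto
  qed
  have Il: "(\<lambda>m. Ient (\<lambda>x. u (r m) $ x)) \<longlonglongrightarrow> Ient (\<lambda>x. l $ x)"
    by (rule continuous_on_tendsto_compose[OF Ient_cont ul' lS]) (simp add: uS)
  have Rl: "(\<lambda>m. (1 - pe (Suc (r m))) * R - 6 / real (Suc (r m))) \<longlonglongrightarrow> (1 - 0) * R - 0"
    by (intro tendsto_intros pe_r six)
  have ev: "eventually (\<lambda>m. pe (Suc (r m)) < 1) sequentially"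
    using order_tendstoD(2)[OF pe_r, of 1] by simp
  have "R \<le> Ient (\<lambda>x. l $ x)"
  proof (rule tendsto_le[OF trivial_limit_sequentially Il])
    show "(\<lambda>m. (1 - pe (Suc (r m))) * R - 6 / real (Suc (r m))) \<longlonglongrightarrow> R" using Rl by simp
    show "eventually (\<lambda>m. (1 - pe (Suc (r m))) * R - 6 / real (Suc (r m)) \<le> Ient (\<lambda>x. u (r m) $ x)) sequentially"
      using ev by eventually_elim (rule lb, simp)
  qed
  then show ?thesis using lK by blast
qed

end


context chan begin

lemma zero_ach: "covert_achievable_SCT W Q x0 0"
proof -
  define enc :: "nat \<Rightarrow> nat \<Rightarrow> nat \<Rightarrow> 's list \<Rightarrow> 'x" where "enc = (\<lambda>n i m ss. x0)"
  define dec :: "nat \<Rightarrow> 'y list \<Rightarrow> nat" where "dec = (\<lambda>n ys. 1)"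
  have N1: "num_msgs 0 n = 1" for n unfolding num_msgs_def by simp
  have err: "error_prob W Q (num_msgs 0 n) n (enc n) (dec n) = 0" for n
    unfolding N1 error_prob_def dec_def by simp
  have wd: "warden_dist W Q 1 n (enc n) zs = Q0_prod W Q x0 n zs" for n zs
  proof -
    have "warden_dist W Q 1 n (enc n) zs
        = (\<Sum>ss\<in>seqs n. \<Sum>ys\<in>seqs n. \<Prod>i<n. Q (ss!i) * W x0 (ss!i) (ys!i) (zs!i))"
      unfolding warden_dist_def code_joint_def enc_def by simp
    also have "\<dots> = (\<Sum>ss\<in>seqs n. \<Prod>i<n. \<Sum>y\<in>UNIV. Q (ss!i) * W x0 (ss!i) y (zs!i))"
      by (intro sum.cong refl) (rule sum_seqs_prod[where f="\<lambda>i y. Q (_ ! i) * W x0 (_ ! i) y (zs!i)"])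
    also have "\<dots> = (\<Prod>i<n. \<Sum>s\<in>UNIV. \<Sum>y\<in>UNIV. Q s * W x0 s y (zs!i))"
      by (rule sum_seqs_prod[where f="\<lambda>i s. \<Sum>y\<in>UNIV. Q s * W x0 s y (zs!i)"])
    also have "\<dots> = Q0_prod W Q x0 n zs"
      unfolding Q0_prod_def Q0_def by (simp add: sum_distrib_left)
    finally show ?thesis .
  qed
  have kl: "kl_div (seqs n) (warden_dist W Q (num_msgs 0 n) n (enc n)) (Q0_prod W Q x0 n) = 0" for n
    unfolding N1 kl_div_def wd by (intro sum.neutral) auto
  show ?thesis unfolding covert_achievable_SCT_def
    by (intro conjI exI[of _ enc] exI[of _ dec]) (auto simp: err kl)
qed

end


theorem theorem12:
  fixes W :: "'x::finite \<Rightarrow> 's::finite \<Rightarrow> 'y::finite \<Rightarrow> 'z::finite \<Rightarrow> real"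
    and Q :: "'s \<Rightarrow> real"
    and x0 :: 'x
  assumes W_pmf: "\<And>x s. is_pmf_on UNIV (\<lambda>(y, z). W x s y z)"
    and Q_pmf: "is_pmf_on UNIV Q"
    and Q0_full: "\<And>z. Q0 W Q x0 z > 0"
  shows "(\<exists>r\<in>rate_set_SCT W Q x0. \<forall>r'\<in>rate_set_SCT W Q x0. r' \<le> r)
    \<and> covert_capacity_SCT W Q x0 \<le> (GREATEST r. r \<in> rate_set_SCT W Q x0)"
proof -
  have Wnn: "0 \<le> W x s y z" for x s y z
    using W_pmf[of x s] unfolding is_pmf_on_def by (metis (mono_tags) UNIV_I case_prod_conv)
  have Qnn: "0 \<le> Q s" for s using Q_pmf unfolding is_pmf_on_def by simp
  have Qsum: "(\<Sum>s\<in>UNIV. Q s) = 1" using Q_pmf unfolding is_pmf_on_def by simp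
  have Wsum: "(\<Sum>y\<in>UNIV. \<Sum>z\<in>UNIV. W x s y z) = 1" for x s
  proof -
    have "(\<Sum>yz\<in>UNIV. (\<lambda>(y, z). W x s y z) yz) = 1" using W_pmf[of x s] unfolding is_pmf_on_def by simp
    then show ?thesis unfolding UNIV_Times_UNIV[symmetric] sum.cartesian_product' by simp
  qed
  interpret chan W Q by unfold_locales (use Wnn Qnn Qsum Wsum in auto)
  have q: "\<And>z. 0 < Wz x0 z" using Q0_full by (simp add: Q0_eq)
  obtain p where p: "p \<in> Kset x0" and pmax: "\<forall>q\<in>Kset x0. Imi q \<le> Imi p"
    using Kset_max by blast
  have pnn: "\<And>x. 0 \<le> p x" and ps: "(\<Sum>x\<in>UNIV. p x) = 1" using p unfolding Kset_def by auto
  have M0: "0 \<le> Imi p" by (rule Imi_nonneg[OF pnn ps])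
  have inR: "Imi p \<in> rate_set_SCT W Q x0" unfolding rate_set_eq using M0 p by auto
  have upper: "\<And>r. r \<in> rate_set_SCT W Q x0 \<Longrightarrow> r \<le> Imi p"
    unfolding rate_set_eq using pmax by force
  have G: "(GREATEST r. r \<in> rate_set_SCT W Q x0) = Imi p"
    by (rule Greatest_equality[where P="\<lambda>r. r \<in> rate_set_SCT W Q x0", OF inR upper])
  have cap: "covert_capacity_SCT W Q x0 \<le> Imi p"
    unfolding covert_capacity_SCT_def
  proof (rule cSup_least)
    show "{R. covert_achievable_SCT W Q x0 R} \<noteq> {}" using zero_ach by auto
    fix R assume "R \<in> {R. covert_achievable_SCT W Q x0 R}"
    then obtain v where v: "v \<in> Kvec x0" "R \<le> Ient (\<lambda>x. v$x)" using achievable_le[OF q] by blast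
    have "Ient (\<lambda>x. v$x) = Imi (\<lambda>x. v$x)" using Imi_Ient[of "\<lambda>x. v$x"] v(1) unfolding Kvec_def by auto
    also have "\<dots> \<le> Imi p" using pmax vec_in_Kset[OF v(1)] by blast
    finally show "R \<le> Imi p" using v(2) by simp
  qed
  show ?thesis using inR upper G cap by auto
qed

end
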